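(* There exist $\varepsilon_1>0$ and $C>0$ such that for all $\varepsilon\in(0,\varepsilon_1]$ the following holds. Consider an initial condition of the hard core system with $n_1=n_2=1$ with $h_\varepsilon(0)\in\mathcal V$ and $\varphi_1=0$ at time $0$; let $t_{1,\varepsilon}=\inf\{t>0:\varphi_{1,\varepsilon}(t)=0\}$, and let $z_0(t)$ be the unperturbed ($\varepsilon=0$) motion from $z_0(0)=z_\varepsilon(0)$ (in which $X,W,s_1,s_2$ stay constant and $\varphi_1,\varphi_2$ rotate with constant rates $s_1/(2X)$ and $s_2/(2(1-X))$). If $t_{1,\varepsilon}\le (T\wedge T_\varepsilon)/\varepsilon$, then \[ \sup_{0\le t\le t_{1,\varepsilon}}|z_0(t)-z_\varepsilon(t)|\le C\varepsilon \] (distance in the coordinates $z=(X,W,s_1,s_2,\varphi_1,\varphi_2)$, angles modulo $1$).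
   Context: Hard core piston system with $n_1=n_2=1$: a piston of mass $M$ at position $X\in(0,1)$ with velocity $V$, a gas particle of mass $m_1$ at $x_1\in[0,X]$ with velocity $v_1$ and one of mass $m_2$ at $x_2\in[X,1]$ with velocity $v_2$; particles move freely between collisions, gas particles collide elastically with walls at $0$ and $1$ and with the piston (conservation of momentum and kinetic energy); if both gas particles hit the piston simultaneously, the left collision is applied first. Set $\varepsilon=M^{-1/2}$, $W=V/\varepsilon$, $s_i=|v_i|$, slow variables $h=(X,W,s_1,s_2)$. Angle variables in $\mathbb R/\mathbb Z$: $\varphi_1=x_1/(2X)$ if $v_1>0$, $\varphi_1=1-x_1/(2X)$ if $v_1<0$; $\varphi_2=(1-x_2)/(2(1-X))$ if $v_2<0$, $\varphi_2=1-(1-x_2)/(2(1-X))$ if $v_2>0$ (piston collisions occur exactly when $\varphi_i=1/2$). $z_\varepsilon(t)=(h_\varepsilon(t),\varphi_{1,\varepsilon}(t),\varphi_{2,\varepsilon}(t))$ denotes the motion with $M=\varepsilon^{-2}$ (left continuous in $t$). Averaged field $\bar H(h)=\bigl(W,\ m_1s_1^2/X-m_2s_2^2/(1-X),\ -s_1W/X,\ s_2W/(1-X)\bigr)$; $\bar h$ solves $d\bar h/d\tau=\bar H(\bar h)$, $\bar h(0)=h_\varepsilon(0)$. $\mathcal V\subset\mathbb R^4$ is compact with $h\in\mathcal V\Rightarrow X\in A,W\in B,s_i\in C$ for compact $A\subset(0,1)$, $B\subset\mathbb R$, $C\subset(0,\infty)$. $T>0$ fixed; $T_\varepsilon=\inf\{\tau\ge0:\bar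 h(\tau)\notin\mathcal V\text{ or }h_\varepsilon(\tau/\varepsilon)\notin\mathcal V\}$. *)

theory Defs
  imports "HOL-Analysis.Analysis"
begin

text \<open>Full phase-space state: piston position X and velocity V, left particle
  position x1 and velocity v1, right particle position x2 and velocity v2.\<close>

record pst =
  pX  :: real
  pV  :: real
  px1 :: real
  pv1 :: real
  px2 :: real
  pv2 :: real

definition fly :: "pst \<Rightarrow> real \<Rightarrow> pst" where
  "fly s d = s\<lparr>pX := pX s + pV s * d, px1 := px1 s + pv1 s * d, px2 := px2 s + pv2 s * d\<rparr>"

definition event_delays :: "pst \<Rightarrow> real set" where
  "event_delays s = {d.
      (pv1 s < 0 \<and> d = px1 s / (- pv1 s))
    \<or> (pv1 s > pV s \<and> d = (pX s - px1 s) / (pv1 s - pV s))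
    \<or> (pv2 s < pV s \<and> d = (px2 s - pX s) / (pV s - pv2 s))
    \<or> (pv2 s > 0 \<and> d = (1 - px2 s) / pv2 s)}"

definition next_delay :: "pst \<Rightarrow> real option" where
  "next_delay s = (if event_delays s = {} then None else Some (Min (event_delays s)))"

text \<open>Elastic collisions (conservation of momentum and kinetic energy); M is the
  piston mass, m the gas particle mass.\<close>
definition collide_left :: "real \<Rightarrow> real \<Rightarrow> pst \<Rightarrow> pst" where
  "collide_left M m s = s\<lparr>pv1 := ((m - M) * pv1 s + 2 * M * pV s) / (m + M),
                          pV := ((M - m) * pV s + 2 * m * pv1 s) / (m + M)\<rparr>"

definition collide_right :: "real \<Rightarrow> real \<Rightarrow> pst \<Rightarrow> pst" where
  "collide_right M m s = s\<lparr>pv2 := ((m - M) * pv2 s + 2 * M * pV s) / (m + M),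
                           pV := ((M - m) * pV s + 2 * m * pv2 s) / (m + M)\<rparr>"

definition resolve :: "real \<Rightarrow> real \<Rightarrow> real \<Rightarrow> pst \<Rightarrow> pst" where
  "resolve M m1 m2 s =
    (let s1 = (if px1 s = 0 \<and> pv1 s < 0 then s\<lparr>pv1 := - pv1 s\<rparr>
               else if px1 s = pX s \<and> pv1 s > pV s then collide_left M m1 s
               else s)
     in (if px2 s1 = pX s1 \<and> pv2 s1 < pV s1 then collide_right M m2 s1
         else if px2 s1 = 1 \<and> pv2 s1 > 0 then s1\<lparr>pv2 := - pv2 s1\<rparr>
         else s1))"

fun events :: "real \<Rightarrow> real \<Rightarrow> real \<Rightarrow> pst \<Rightarrow> nat \<Rightarrow> real \<times> pst" where
  "events M m1 m2 s0 0 = (0, s0)"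
| "events M m1 m2 s0 (Suc k) =
    (case events M m1 m2 s0 k of (t, s) \<Rightarrow>
       (case next_delay s of None \<Rightarrow> (t, s)
        | Some d \<Rightarrow> (t + d, resolve M m1 m2 (fly s d))))"

text \<open>The motion (left continuous in t), for piston mass M and gas masses m1, m2,
  from initial state s0.\<close>
definition motion :: "real \<Rightarrow> real \<Rightarrow> real \<Rightarrow> pst \<Rightarrow> real \<Rightarrow> pst" where
  "motion M m1 m2 s0 t =
    (if t \<le> 0 then s0
     else if (\<exists>k. next_delay (snd (events M m1 m2 s0 k)) = None
                 \<or> t \<le> fst (events M m1 m2 s0 (Suc k)))
     then (let k = (LEAST k. next_delay (snd (events M m1 m2 s0 k)) = None
                           \<or> t \<le> fst (events M m1 m2 s0 (Suc k)))
           in fly (snd (events M m1 m2 s0 k)) (t - fst (events M m1 m2 s0 k)))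
     else undefined)"

definition emotion :: "real \<Rightarrow> real \<Rightarrow> real \<Rightarrow> pst \<Rightarrow> real \<Rightarrow> pst" where
  "emotion eps m1 m2 s0 t = motion (1 / eps\<^sup>2) m1 m2 s0 t"

definition hslow :: "real \<Rightarrow> pst \<Rightarrow> real \<times> real \<times> real \<times> real" where
  "hslow eps s = (pX s, pV s / eps, \<bar>pv1 s\<bar>, \<bar>pv2 s\<bar>)"

text \<open>Angle variables (real representatives of elements of R/Z).\<close>
definition phi1 :: "pst \<Rightarrow> real" where
  "phi1 s = (if pv1 s < 0 then 1 - px1 s / (2 * pX s) else px1 s / (2 * pX s))"

definition phi2 :: "pst \<Rightarrow> real" where
  "phi2 s = (if pv2 s < 0 then (1 - px2 s) / (2 * (1 - pX s))
             else 1 - (1 - px2 s) / (2 * (1 - pX s)))"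

definition zcoord :: "real \<Rightarrow> pst \<Rightarrow> real \<times> real \<times> real \<times> real \<times> real \<times> real" where
  "zcoord eps s = (pX s, pV s / eps, \<bar>pv1 s\<bar>, \<bar>pv2 s\<bar>, phi1 s, phi2 s)"

definition zfree :: "real \<times> real \<times> real \<times> real \<times> real \<times> real \<Rightarrow> real
                     \<Rightarrow> real \<times> real \<times> real \<times> real \<times> real \<times> real" where
  "zfree z t = (case z of (X, W, s1, s2, p1, p2) \<Rightarrow>
      (X, W, s1, s2, p1 + s1 / (2 * X) * t, p2 + s2 / (2 * (1 - X)) * t))"

definition circ_dist :: "real \<Rightarrow> real \<Rightarrow> real" where
  "circ_dist a b = \<bar>(a - b) - of_int (round (a - b))\<bar>"

definition zdist :: "real \<times> real \<times> real \<times> real \<times> real \<times> real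
                   \<Rightarrow> real \<times> real \<times> real \<times> real \<times> real \<times> real \<Rightarrow> real" where
  "zdist z z' = (case z of (X, W, s1, s2, p1, p2) \<Rightarrow> case z' of (X', W', s1', s2', p1', p2') \<Rightarrow>
      Max {\<bar>X - X'\<bar>, \<bar>W - W'\<bar>, \<bar>s1 - s1'\<bar>, \<bar>s2 - s2'\<bar>, circ_dist p1 p1', circ_dist p2 p2'})"

definition Hbar :: "real \<Rightarrow> real \<Rightarrow> real \<times> real \<times> real \<times> real \<Rightarrow> real \<times> real \<times> real \<times> real" where
  "Hbar m1 m2 h = (case h of (X, W, s1, s2) \<Rightarrow>
      (W, m1 * s1\<^sup>2 / X - m2 * s2\<^sup>2 / (1 - X), - s1 * W / X, s2 * W / (1 - X)))"

text \<open>The set whose infimum is T_eps.\<close>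
definition exit_set :: "real \<Rightarrow> real \<Rightarrow> real \<Rightarrow> (real \<times> real \<times> real \<times> real) set \<Rightarrow> pst
                        \<Rightarrow> (real \<Rightarrow> real \<times> real \<times> real \<times> real) \<Rightarrow> real set" where
  "exit_set eps m1 m2 Vs s0 hb =
     {\<tau>. \<tau> \<ge> 0 \<and> (hb \<tau> \<notin> Vs \<or> hslow eps (emotion eps m1 m2 s0 (\<tau> / eps)) \<notin> Vs)}"

text \<open>min T T_eps, with inf of the empty set = +infinity.\<close>
definition T_min :: "real \<Rightarrow> real set \<Rightarrow> real" where
  "T_min T E = (if E = {} then T else min T (Inf E))"

text \<open>Set whose infimum is t_{1,eps}.\<close>
definition return_set :: "real \<Rightarrow> real \<Rightarrow> real \<Rightarrow> pst \<Rightarrow> real set" where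
  "return_set eps m1 m2 s0 = {t. t > 0 \<and> phi1 (emotion eps m1 m2 s0 t) \<in> \<int>}"

end

theory Submission
  imports Defs
begin


definition ordp :: "pst \<Rightarrow> bool" where
  "ordp s \<longleftrightarrow> 0 \<le> px1 s \<and> px1 s \<le> pX s \<and> pX s \<le> px2 s \<and> px2 s \<le> 1"

definition en :: "real \<Rightarrow> real \<Rightarrow> real \<Rightarrow> pst \<Rightarrow> real" where
  "en M m1 m2 s = M * (pV s)\<^sup>2 + m1 * (pv1 s)\<^sup>2 + m2 * (pv2 s)\<^sup>2"

definition step1 :: "real \<Rightarrow> real \<Rightarrow> pst \<Rightarrow> pst" where
  "step1 M m1 s = (if px1 s = 0 \<and> pv1 s < 0 then s\<lparr>pv1 := - pv1 s\<rparr>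
               else if px1 s = pX s \<and> pv1 s > pV s then collide_left M m1 s
               else s)"

definition step2 :: "real \<Rightarrow> real \<Rightarrow> pst \<Rightarrow> pst" where
  "step2 M m2 s1 = (if px2 s1 = pX s1 \<and> pv2 s1 < pV s1 then collide_right M m2 s1
         else if px2 s1 = 1 \<and> pv2 s1 > 0 then s1\<lparr>pv2 := - pv2 s1\<rparr>
         else s1)"

lemma resolve_eq: "resolve M m1 m2 s = step2 M m2 (step1 M m1 s)"
  unfolding resolve_def step1_def step2_def Let_def by simp

lemma fly_simps[simp]:
  "pX (fly s d) = pX s + pV s * d" "px1 (fly s d) = px1 s + pv1 s * d"
  "px2 (fly s d) = px2 s + pv2 s * d" "pV (fly s d) = pV s"
  "pv1 (fly s d) = pv1 s" "pv2 (fly s d) = pv2 s"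
  unfolding fly_def by simp_all

lemma fly_0[simp]: "fly s 0 = s"
  unfolding fly_def by simp

lemma collide_left_simps[simp]:
  "pX (collide_left M m s) = pX s" "px1 (collide_left M m s) = px1 s"
  "px2 (collide_left M m s) = px2 s" "pv2 (collide_left M m s) = pv2 s"
  "pv1 (collide_left M m s) = ((m - M) * pv1 s + 2 * M * pV s) / (m + M)"
  "pV (collide_left M m s) = ((M - m) * pV s + 2 * m * pv1 s) / (m + M)"
  unfolding collide_left_def by simp_all

lemma collide_right_simps[simp]:
  "pX (collide_right M m s) = pX s" "px1 (collide_right M m s) = px1 s"
  "px2 (collide_right M m s) = px2 s" "pv1 (collide_right M m s) = pv1 s"
  "pv2 (collide_right M m s) = ((m - M) * pv2 s + 2 * M * pV s) / (m + M)"
  "pV (collide_right M m s) = ((M - m) * pV s + 2 * m * pv2 s) / (m + M)"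
  unfolding collide_right_def by simp_all

lemma step1_pos[simp]:
  "pX (step1 M m s) = pX s" "px1 (step1 M m s) = px1 s" "px2 (step1 M m s) = px2 s"
  "pv2 (step1 M m s) = pv2 s"
  unfolding step1_def by auto

lemma step2_pos[simp]:
  "pX (step2 M m s) = pX s" "px1 (step2 M m s) = px1 s" "px2 (step2 M m s) = px2 s"
  "pv1 (step2 M m s) = pv1 s"
  unfolding step2_def by auto

lemma resolve_pos[simp]:
  "pX (resolve M m1 m2 s) = pX s" "px1 (resolve M m1 m2 s) = px1 s"
  "px2 (resolve M m1 m2 s) = px2 s"
  unfolding resolve_eq by simp_all

lemma energy_cl:
  fixes M m V v :: real
  assumes "M > 0" "m > 0"
  shows "M * (((M - m) * V + 2 * m * v) / (m + M))\<^sup>2 + m * (((m - M) * v + 2 * M * V) / (m + M))\<^sup>2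
       = M * V\<^sup>2 + m * v\<^sup>2"
proof -
  define A where "A = (M - m) * V + 2 * m * v"
  define B where "B = (m - M) * v + 2 * M * V"
  define q where "q = m + M"
  have h: "q \<noteq> 0" using assms unfolding q_def by simp
  have n: "M * A\<^sup>2 + m * B\<^sup>2 = (M * V\<^sup>2 + m * v\<^sup>2) * q\<^sup>2"
    unfolding A_def B_def q_def by (simp add: power2_eq_square algebra_simps)
  have "M * (A / q)\<^sup>2 + m * (B / q)\<^sup>2 = (M * A\<^sup>2 + m * B\<^sup>2) / q\<^sup>2"
    by (simp add: power_divide add_divide_distrib)
  also have "\<dots> = M * V\<^sup>2 + m * v\<^sup>2" using n h by simp
  finally show ?thesis unfolding A_def B_def q_def .
qed

lemma en_step1: "M > 0 \<Longrightarrow> m1 > 0 \<Longrightarrow> en M m1 m2 (step1 M m1 s) = en M m1 m2 s"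
  unfolding step1_def en_def using energy_cl[of M m1 "pV s" "pv1 s"]
  by (auto simp: algebra_simps)

lemma en_step2: "M > 0 \<Longrightarrow> m2 > 0 \<Longrightarrow> en M m1 m2 (step2 M m2 s) = en M m1 m2 s"
  unfolding step2_def en_def using energy_cl[of M m2 "pV s" "pv2 s"]
  by (auto simp: algebra_simps)

lemma en_resolve: "M > 0 \<Longrightarrow> m1 > 0 \<Longrightarrow> m2 > 0 \<Longrightarrow> en M m1 m2 (resolve M m1 m2 s) = en M m1 m2 s"
  unfolding resolve_eq by (simp add: en_step1 en_step2)

lemma en_fly[simp]: "en M m1 m2 (fly s d) = en M m1 m2 s"
  unfolding en_def by simp

lemma event_delays_sub: "event_delays s \<subseteq> {px1 s / (- pv1 s), (pX s - px1 s) / (pv1 s - pV s),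
   (px2 s - pX s) / (pV s - pv2 s), (1 - px2 s) / pv2 s}"
  unfolding event_delays_def by auto

lemma event_delays_finite: "finite (event_delays s)"
  using event_delays_sub finite_subset by blast

lemma nd_Some: "next_delay s = Some d \<Longrightarrow> d \<in> event_delays s \<and> (\<forall>e\<in>event_delays s. d \<le> e)"
proof -
  assume a: "next_delay s = Some d"
  then have ne: "event_delays s \<noteq> {}" and dm: "d = Min (event_delays s)"
    unfolding next_delay_def by (auto split: if_splits)
  show ?thesis using Min_in[OF event_delays_finite ne] Min_le[OF event_delays_finite] dm by auto
qed

lemma nd_None: "next_delay s = None \<longleftrightarrow> event_delays s = {}"
  unfolding next_delay_def by auto

lemma nd_le1: "next_delay s = Some d \<Longrightarrow> pv1 s < 0 \<Longrightarrow> d \<le> px1 s / (- pv1 s)"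
  using nd_Some unfolding event_delays_def by blast
lemma nd_le2: "next_delay s = Some d \<Longrightarrow> pv1 s > pV s \<Longrightarrow> d \<le> (pX s - px1 s) / (pv1 s - pV s)"
  using nd_Some unfolding event_delays_def by blast
lemma nd_le3: "next_delay s = Some d \<Longrightarrow> pv2 s < pV s \<Longrightarrow> d \<le> (px2 s - pX s) / (pV s - pv2 s)"
  using nd_Some unfolding event_delays_def by blast
lemma nd_le4: "next_delay s = Some d \<Longrightarrow> pv2 s > 0 \<Longrightarrow> d \<le> (1 - px2 s) / pv2 s"
  using nd_Some unfolding event_delays_def by blast

lemma nd_cases: "next_delay s = Some d \<Longrightarrow>
    (pv1 s < 0 \<and> d = px1 s / (- pv1 s))
    \<or> (pv1 s > pV s \<and> d = (pX s - px1 s) / (pv1 s - pV s))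
    \<or> (pv2 s < pV s \<and> d = (px2 s - pX s) / (pV s - pv2 s))
    \<or> (pv2 s > 0 \<and> d = (1 - px2 s) / pv2 s)"
  using nd_Some unfolding event_delays_def by blast

lemma nd_cases_fly: assumes "next_delay s = Some d"
  shows "(pv1 s < 0 \<and> px1 (fly s d) = 0)
    \<or> (pv1 s > pV s \<and> px1 (fly s d) = pX (fly s d))
    \<or> (pv2 s < pV s \<and> px2 (fly s d) = pX (fly s d))
    \<or> (pv2 s > 0 \<and> px2 (fly s d) = 1)"
  using nd_cases[OF assms] by (auto simp: field_simps)

lemma nd_nonneg: assumes "ordp s" "next_delay s = Some d" shows "d \<ge> 0"
  using nd_cases[OF assms(2)] assms(1) unfolding ordp_def
  by (auto intro!: divide_nonneg_pos divide_nonneg_neg)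

lemma fly_gap1: assumes "next_delay s = Some d" "pv1 s < 0" shows "px1 s + pv1 s * d \<ge> 0"
proof -
  have "d \<le> px1 s / (- pv1 s)" using nd_le1 assms by blast
  moreover have "- pv1 s > 0" using assms(2) by simp
  ultimately have "d * (- pv1 s) \<le> px1 s" using pos_le_divide_eq by blast
  then show ?thesis by (simp add: algebra_simps)
qed

lemma fly_gap2: assumes "next_delay s = Some d" "pv1 s > pV s"
  shows "pX s + pV s * d - (px1 s + pv1 s * d) \<ge> 0"
proof -
  have "d \<le> (pX s - px1 s) / (pv1 s - pV s)" using nd_le2 assms by blast
  moreover have "pv1 s - pV s > 0" using assms(2) by simp
  ultimately have "d * (pv1 s - pV s) \<le> pX s - px1 s" using pos_le_divide_eq by blast
  then show ?thesis by (simp add: algebra_simps)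
qed

lemma fly_gap3: assumes "next_delay s = Some d" "pv2 s < pV s"
  shows "px2 s + pv2 s * d - (pX s + pV s * d) \<ge> 0"
proof -
  have "d \<le> (px2 s - pX s) / (pV s - pv2 s)" using nd_le3 assms by blast
  moreover have "pV s - pv2 s > 0" using assms(2) by simp
  ultimately have "d * (pV s - pv2 s) \<le> px2 s - pX s" using pos_le_divide_eq by blast
  then show ?thesis by (simp add: algebra_simps)
qed

lemma fly_gap4: assumes "next_delay s = Some d" "pv2 s > 0"
  shows "1 - (px2 s + pv2 s * d) \<ge> 0"
proof -
  have "d \<le> (1 - px2 s) / pv2 s" using nd_le4 assms by blast
  with assms(2) have "d * pv2 s \<le> 1 - px2 s" using pos_le_divide_eq by blast
  then show ?thesis by (simp add: algebra_simps)
qed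

lemma ordp_fly: assumes "ordp s" "next_delay s = Some d" shows "ordp (fly s d)"
proof -
  have d: "d \<ge> 0" using nd_nonneg assms by blast
  have 1: "px1 s + pv1 s * d \<ge> 0"
  proof (cases "pv1 s < 0")
    case True then show ?thesis using fly_gap1 assms by blast
  next
    case False then show ?thesis using d assms(1) unfolding ordp_def by simp
  qed
  have 2: "pX s + pV s * d - (px1 s + pv1 s * d) \<ge> 0"
  proof (cases "pv1 s > pV s")
    case True then show ?thesis using fly_gap2 assms by blast
  next
    case False
    then have "(pV s - pv1 s) * d \<ge> 0" using d by simp
    then show ?thesis using assms(1) unfolding ordp_def by (simp add: algebra_simps)
  qed
  have 3: "px2 s + pv2 s * d - (pX s + pV s * d) \<ge> 0"
  proof (cases "pv2 s < pV s")
    case True then show ?thesis using fly_gap3 assms by blast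
  next
    case False
    then have "(pv2 s - pV s) * d \<ge> 0" using d by simp
    then show ?thesis using assms(1) unfolding ordp_def by (simp add: algebra_simps)
  qed
  have 4: "1 - (px2 s + pv2 s * d) \<ge> 0"
  proof (cases "pv2 s > 0")
    case True then show ?thesis using fly_gap4 assms by blast
  next
    case False
    then have "pv2 s * d \<le> 0" using d by (simp add: mult_nonpos_nonneg)
    then show ?thesis using assms(1) unfolding ordp_def by (simp add: algebra_simps)
  qed
  show ?thesis using 1 2 3 4 unfolding ordp_def by simp
qed

lemma ordp_resolve[simp]: "ordp (resolve M m1 m2 s) = ordp s"
  unfolding ordp_def by simp

lemma events_Some:
  "next_delay (snd (events M m1 m2 s0 k)) = Some d \<Longrightarrow>
   fst (events M m1 m2 s0 (Suc k)) = fst (events M m1 m2 s0 k) + d \<and>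
   snd (events M m1 m2 s0 (Suc k)) = resolve M m1 m2 (fly (snd (events M m1 m2 s0 k)) d)"
proof -
  assume a: "next_delay (snd (events M m1 m2 s0 k)) = Some d"
  obtain t s where e: "events M m1 m2 s0 k = (t, s)" by (cases "events M m1 m2 s0 k")
  show ?thesis using a e by simp
qed

lemma events_None:
  "next_delay (snd (events M m1 m2 s0 k)) = None \<Longrightarrow>
   events M m1 m2 s0 (Suc k) = events M m1 m2 s0 k"
proof -
  assume a: "next_delay (snd (events M m1 m2 s0 k)) = None"
  obtain t s where e: "events M m1 m2 s0 k = (t, s)" by (cases "events M m1 m2 s0 k")
  show ?thesis using a e by simp
qed

declare events.simps(2)[simp del]

lemma events_0[simp]: "fst (events M m1 m2 s0 0) = 0" "snd (events M m1 m2 s0 0) = s0"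
  by simp_all

lemma events_ordp: "ordp s0 \<Longrightarrow> ordp (snd (events M m1 m2 s0 k))"
proof (induction k)
  case 0 then show ?case by simp
next
  case (Suc k)
  show ?case
  proof (cases "next_delay (snd (events M m1 m2 s0 k))")
    case None then show ?thesis using Suc by (simp add: events_None)
  next
    case (Some d) then show ?thesis using Suc events_Some[OF Some] ordp_fly by simp
  qed
qed

lemma events_mono_Suc: assumes "ordp s0" shows "fst (events M m1 m2 s0 k) \<le> fst (events M m1 m2 s0 (Suc k))"
proof (cases "next_delay (snd (events M m1 m2 s0 k))")
  case None then show ?thesis by (simp add: events_None del: events.simps)
next
  case (Some d)
  have "d \<ge> 0" using nd_nonneg[OF events_ordp[OF assms] Some] .
  then show ?thesis using events_Some[OF Some] by simp
qed

lemma events_mono: "ordp s0 \<Longrightarrow> j \<le> i \<Longrightarrow> fst (events M m1 m2 s0 j) \<le> fst (events M m1 m2 s0 i)"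
  using lift_Suc_mono_le[of "\<lambda>k. fst (events M m1 m2 s0 k)"] events_mono_Suc by blast

lemma events_nonneg: "ordp s0 \<Longrightarrow> 0 \<le> fst (events M m1 m2 s0 k)"
  using events_mono[of s0 0 k] by simp

lemma events_en: "M > 0 \<Longrightarrow> m1 > 0 \<Longrightarrow> m2 > 0 \<Longrightarrow>
   en M m1 m2 (snd (events M m1 m2 s0 k)) = en M m1 m2 s0"
proof (induction k)
  case 0 then show ?case by simp
next
  case (Suc k)
  show ?case
  proof (cases "next_delay (snd (events M m1 m2 s0 k))")
    case None then show ?thesis using Suc by (simp add: events_None)
  next
    case (Some d) then show ?thesis using Suc events_Some[OF Some] en_resolve by simp
  qed
qed

lemma motion_eq:
  assumes "ordp s0" "0 < t"
    and "\<forall>j\<le>k. next_delay (snd (events M m1 m2 s0 j)) \<noteq> None"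
    and "fst (events M m1 m2 s0 k) < t" "t \<le> fst (events M m1 m2 s0 (Suc k))"
  shows "motion M m1 m2 s0 t = fly (snd (events M m1 m2 s0 k)) (t - fst (events M m1 m2 s0 k))"
proof -
  let ?P = "\<lambda>k. next_delay (snd (events M m1 m2 s0 k)) = None
                 \<or> t \<le> fst (events M m1 m2 s0 (Suc k))"
  have Pk: "?P k" using assms by blast
  have L: "(LEAST k. ?P k) = k"
  proof (rule Least_equality)
    show "?P k" by (rule Pk)
  next
    fix j assume Pj: "?P j"
    show "k \<le> j"
    proof (rule ccontr)
      assume "\<not> k \<le> j"
      then have jk: "j < k" by simp
      then have "next_delay (snd (events M m1 m2 s0 j)) \<noteq> None" using assms(3) by simp
      moreover have "fst (events M m1 m2 s0 (Suc j)) \<le> fst (events M m1 m2 s0 k)"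
        using events_mono[OF assms(1)] jk by simp
      ultimately show False using Pj assms(4) by simp
    qed
  qed
  have ex: "\<exists>k. ?P k" using Pk by blast
  have nt: "\<not> t \<le> 0" using assms(2) by simp
  show ?thesis unfolding motion_def Let_def
    apply (subst if_not_P[OF nt])
    apply (subst if_P[OF ex])
    apply (simp only: L)
    done
qed



definition Fq :: "real \<Rightarrow> real \<Rightarrow> real \<Rightarrow> pst \<Rightarrow> real" where
  "Fq M m1 m2 s = M * pV s + m1 * pv1 s * (px1 s / pX s) + m2 * pv2 s * ((1 - px2 s) / (1 - pX s))"

lemma momentum_cl:
  fixes M m V v :: real
  assumes "M > 0" "m > 0"
  shows "M * (((M - m) * V + 2 * m * v) / (m + M)) + m * (((m - M) * v + 2 * M * V) / (m + M))
       = M * V + m * v"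
proof -
  define A where "A = (M - m) * V + 2 * m * v"
  define B where "B = (m - M) * v + 2 * M * V"
  define q where "q = m + M"
  have h: "q \<noteq> 0" using assms unfolding q_def by simp
  have n: "M * A + m * B = (M * V + m * v) * q"
    unfolding A_def B_def q_def by (simp add: algebra_simps)
  have "M * (A / q) + m * (B / q) = (M * A + m * B) / q"
    by (simp add: add_divide_distrib)
  also have "\<dots> = M * V + m * v" using n h by simp
  finally show ?thesis unfolding A_def B_def q_def .
qed

lemma Fq_step1: assumes "M > 0" "m1 > 0" "pX s > 0" shows "Fq M m1 m2 (step1 M m1 s) = Fq M m1 m2 s"
proof -
  consider (a) "px1 s = 0 \<and> pv1 s < 0" | (b) "\<not> (px1 s = 0 \<and> pv1 s < 0)" "px1 s = pX s \<and> pv1 s > pV s"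
    | (c) "\<not> (px1 s = 0 \<and> pv1 s < 0)" "\<not> (px1 s = pX s \<and> pv1 s > pV s)" by blast
  then show ?thesis
  proof cases
    case a
    have st: "step1 M m1 s = s\<lparr>pv1 := - pv1 s\<rparr>" unfolding step1_def by (simp only: if_P[OF a])
    show ?thesis unfolding st Fq_def using a by simp
  next
    case b
    have st: "step1 M m1 s = collide_left M m1 s" unfolding step1_def
      by (simp only: if_not_P[OF b(1)] if_P[OF b(2)])
    have e: "px1 s / pX s = 1" using b assms by simp
    define V' where "V' = pV (collide_left M m1 s)"
    define v' where "v' = pv1 (collide_left M m1 s)"
    have mom: "M * V' + m1 * v' = M * pV s + m1 * pv1 s" unfolding V'_def v'_def
      using momentum_cl[OF assms(1,2), of "pV s" "pv1 s"] by simp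
    have "Fq M m1 m2 (step1 M m1 s) = M * V' + m1 * v' + m2 * pv2 s * ((1 - px2 s) / (1 - pX s))"
      unfolding st Fq_def V'_def v'_def using e by simp
    also have "\<dots> = Fq M m1 m2 s" unfolding Fq_def using mom e by simp
    finally show ?thesis .
  next
    case c
    have st: "step1 M m1 s = s" unfolding step1_def by (simp only: if_not_P[OF c(1)] if_not_P[OF c(2)])
    show ?thesis unfolding st ..
  qed
qed

lemma Fq_step2: assumes "M > 0" "m2 > 0" "pX s < 1" shows "Fq M m1 m2 (step2 M m2 s) = Fq M m1 m2 s"
proof -
  consider (a) "px2 s = pX s \<and> pv2 s < pV s" | (b) "\<not> (px2 s = pX s \<and> pv2 s < pV s)" "px2 s = 1 \<and> pv2 s > 0"
    | (c) "\<not> (px2 s = pX s \<and> pv2 s < pV s)" "\<not> (px2 s = 1 \<and> pv2 s > 0)" by blast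
  then show ?thesis
  proof cases
    case a
    have st: "step2 M m2 s = collide_right M m2 s" unfolding step2_def
      by (simp only: if_P[OF a])
    have e: "(1 - px2 s) / (1 - pX s) = 1" using a assms by simp
    define V' where "V' = pV (collide_right M m2 s)"
    define v' where "v' = pv2 (collide_right M m2 s)"
    have mom: "M * V' + m2 * v' = M * pV s + m2 * pv2 s" unfolding V'_def v'_def
      using momentum_cl[OF assms(1,2), of "pV s" "pv2 s"] by simp
    have "Fq M m1 m2 (step2 M m2 s) = M * V' + m1 * pv1 s * (px1 s / pX s) + m2 * v'"
      unfolding st Fq_def V'_def v'_def using e by simp
    also have "\<dots> = Fq M m1 m2 s" unfolding Fq_def using mom e by simp
    finally show ?thesis .
  next
    case b
    have st: "step2 M m2 s = s\<lparr>pv2 := - pv2 s\<rparr>" unfolding step2_def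
      by (simp only: if_not_P[OF b(1)] if_P[OF b(2)])
    show ?thesis unfolding st Fq_def using b by simp
  next
    case c
    have st: "step2 M m2 s = s" unfolding step2_def by (simp only: if_not_P[OF c(1)] if_not_P[OF c(2)])
    show ?thesis unfolding st ..
  qed
qed

lemma Fq_resolve: assumes "M > 0" "m1 > 0" "m2 > 0" "pX s > 0" "pX s < 1"
  shows "Fq M m1 m2 (resolve M m1 m2 s) = Fq M m1 m2 s"
  unfolding resolve_eq using assms by (simp add: Fq_step1 Fq_step2)

lemma sq_bound: fixes x Q :: real assumes "x\<^sup>2 \<le> Q" shows "\<bar>x\<bar> \<le> 1 + Q"
proof (cases "\<bar>x\<bar> \<le> 1")
  case True
  have "0 \<le> x\<^sup>2" by simp
  then show ?thesis using assms True by linarith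
next
  case False
  then have "\<bar>x\<bar> * 1 \<le> \<bar>x\<bar> * \<bar>x\<bar>" by (intro mult_left_mono) auto
  also have "\<dots> = x\<^sup>2" by (simp add: power2_eq_square abs_mult_self_eq)
  finally show ?thesis using assms by simp
qed

lemma frac_diff_eq:
  fixes y w d Y Y' U :: real
  assumes "Y \<noteq> 0" "Y' \<noteq> 0" "Y' = Y + U * d"
  shows "(y + w * d) / Y' - y / Y = d * (w * Y - y * U) / (Y * Y')"
  using assms by (simp add: field_simps)

lemma frac_diff_bound:
  fixes y w d Y Y' U P Q ymin :: real
  assumes "Y > 0" "Y' \<ge> ymin" "ymin > 0" "Y' = Y + U * d" "0 \<le> y" "y \<le> Y"
    "\<bar>w\<bar> \<le> P" "\<bar>U\<bar> \<le> Q" "d \<ge> 0"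
  shows "\<bar>(y + w * d) / Y' - y / Y\<bar> \<le> d * (P + Q) / ymin"
proof -
  have Y': "Y' > 0" using assms by simp
  have e: "(y + w * d) / Y' - y / Y = d * (w * Y - y * U) / (Y * Y')"
    using frac_diff_eq assms Y' by simp
  have "\<bar>w * Y - y * U\<bar> \<le> \<bar>w\<bar> * Y + y * \<bar>U\<bar>"
    using assms by (simp add: abs_mult abs_triangle_ineq4 order.trans[OF abs_triangle_ineq4])
  also have "\<dots> \<le> P * Y + Y * Q"
    using assms by (intro add_mono mult_mono) auto
  finally have n: "\<bar>w * Y - y * U\<bar> \<le> Y * (P + Q)" by (simp add: algebra_simps)
  have "\<bar>d * (w * Y - y * U) / (Y * Y')\<bar> = d * \<bar>w * Y - y * U\<bar> / (Y * Y')"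
    using assms Y' by (simp add: abs_mult)
  also have "\<dots> \<le> d * (Y * (P + Q)) / (Y * Y')"
    using n assms Y' by (intro divide_right_mono mult_left_mono) auto
  also have "\<dots> = d * (P + Q) / Y'" using assms by simp
  also have "\<dots> \<le> d * (P + Q) / ymin"
  proof -
    have "0 \<le> P + Q" using assms by linarith
    then show ?thesis using assms by (intro divide_left_mono mult_nonneg_nonneg) auto
  qed
  finally show ?thesis using e by simp
qed

lemma phase_arith:
  fixes u s Y Y' Y0 y U d e mu Cv Xe Wm vm :: real
  assumes "mu > 0" "Y \<ge> mu" "Y' \<ge> mu" "Y0 \<ge> mu" "0 \<le> y" "y \<le> Y" "d \<ge> 0"
    "\<bar>u - s\<bar> \<le> Cv * e" "\<bar>Y0 - Y'\<bar> \<le> Xe * e" "\<bar>U\<bar> \<le> e * Wm" "0 \<le> s" "s \<le> vm"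
  shows "\<bar>d * (u * Y - y * U) / (2 * Y * Y') - s / (2 * Y0) * d\<bar>
         \<le> (Cv / (2 * mu) + vm * Xe / (2 * mu\<^sup>2) + Wm / (2 * mu)) * e * d"
proof -
  have pos: "Y > 0" "Y' > 0" "Y0 > 0" using assms by linarith+
  have h1: "d * (u * Y - y * U) / (2 * Y * Y') - s / (2 * Y0) * d
     = d * ((u - s) / (2 * Y') + s * (Y0 - Y') / (2 * Y' * Y0) - y * U / (2 * Y * Y'))"
    using pos by (simp add: field_simps)
  have b1: "\<bar>(u - s) / (2 * Y')\<bar> \<le> Cv * e / (2 * mu)"
  proof -
    have "\<bar>(u - s) / (2 * Y')\<bar> = \<bar>u - s\<bar> / (2 * Y')" using pos by (simp add: abs_divide)
    also have "\<dots> \<le> Cv * e / (2 * mu)"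
      using assms by (intro frac_le) auto
    finally show ?thesis .
  qed
  have b2: "\<bar>s * (Y0 - Y') / (2 * Y' * Y0)\<bar> \<le> vm * (Xe * e) / (2 * mu * mu)"
  proof -
    have "\<bar>s * (Y0 - Y') / (2 * Y' * Y0)\<bar> = s * \<bar>Y0 - Y'\<bar> / (2 * Y' * Y0)"
      using pos assms by (simp add: abs_divide abs_mult)
    also have "\<dots> \<le> vm * (Xe * e) / (2 * mu * mu)"
    proof (rule frac_le)
      show "0 \<le> vm * (Xe * e)" using assms by (meson abs_ge_zero order.trans mult_nonneg_nonneg)
      show "s * \<bar>Y0 - Y'\<bar> \<le> vm * (Xe * e)" using assms by (intro mult_mono) auto
      show "0 < 2 * mu * mu" using assms by simp
      show "2 * mu * mu \<le> 2 * Y' * Y0" using assms by (intro mult_mono) auto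
    qed
    finally show ?thesis .
  qed
  have b3: "\<bar>y * U / (2 * Y * Y')\<bar> \<le> e * Wm / (2 * mu)"
  proof -
    have "\<bar>y * U / (2 * Y * Y')\<bar> = y * \<bar>U\<bar> / (2 * Y * Y')"
      using pos assms by (simp add: abs_divide abs_mult)
    also have "\<dots> \<le> Y * \<bar>U\<bar> / (2 * Y * Y')"
      using pos assms by (intro divide_right_mono mult_right_mono) auto
    also have "\<dots> = \<bar>U\<bar> / (2 * Y')" using pos by simp
    also have "\<dots> \<le> e * Wm / (2 * mu)"
      using assms by (intro frac_le) auto
    finally show ?thesis .
  qed
  have "\<bar>(u - s) / (2 * Y') + s * (Y0 - Y') / (2 * Y' * Y0) - y * U / (2 * Y * Y')\<bar>
      \<le> Cv * e / (2 * mu) + vm * (Xe * e) / (2 * mu * mu) + e * Wm / (2 * mu)"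
    using b1 b2 b3 by linarith
  also have "\<dots> = (Cv / (2 * mu) + vm * Xe / (2 * mu\<^sup>2) + Wm / (2 * mu)) * e"
    by (simp add: field_simps power2_eq_square)
  finally have "\<bar>(u - s) / (2 * Y') + s * (Y0 - Y') / (2 * Y' * Y0) - y * U / (2 * Y * Y')\<bar>
      \<le> (Cv / (2 * mu) + vm * Xe / (2 * mu\<^sup>2) + Wm / (2 * mu)) * e" .
  then have "d * \<bar>(u - s) / (2 * Y') + s * (Y0 - Y') / (2 * Y' * Y0) - y * U / (2 * Y * Y')\<bar>
      \<le> d * ((Cv / (2 * mu) + vm * Xe / (2 * mu\<^sup>2) + Wm / (2 * mu)) * e)"
    using assms by (intro mult_left_mono) auto
  note ineq = this
  have "\<bar>d * ((u - s) / (2 * Y') + s * (Y0 - Y') / (2 * Y' * Y0) - y * U / (2 * Y * Y'))\<bar>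
     = d * \<bar>(u - s) / (2 * Y') + s * (Y0 - Y') / (2 * Y' * Y0) - y * U / (2 * Y * Y')\<bar>"
    using assms by (simp add: abs_mult)
  also have "\<dots> \<le> d * ((Cv / (2 * mu) + vm * Xe / (2 * mu\<^sup>2) + Wm / (2 * mu)) * e)" by (rule ineq)
  also have "\<dots> = (Cv / (2 * mu) + vm * Xe / (2 * mu\<^sup>2) + Wm / (2 * mu)) * e * d" by simp
  finally show ?thesis unfolding h1 .
qed

locale traj =
  fixes m1 m2 eps a b c D Bm :: real and s0 :: pst
    and Emax Wm vm Tm rho R dl mu LF CW C1 C2 Xe Cp :: real
  assumes m1: "m1 > 0" and m2: "m2 > 0" and eps: "eps > 0" and eps1: "eps \<le> 1"
    and a: "0 < a" and ab: "a \<le> b" and b: "b < 1" and c: "0 < c" and cD: "c \<le> D" and Bm: "0 \<le> Bm"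
    and s0ord: "ordp s0" and x10: "px1 s0 = 0"
    and X0a: "a \<le> pX s0" and X0b: "pX s0 \<le> b" and W0: "\<bar>pV s0 / eps\<bar> \<le> Bm"
    and v10: "c \<le> \<bar>pv1 s0\<bar>" "\<bar>pv1 s0\<bar> \<le> D" and v20: "c \<le> \<bar>pv2 s0\<bar>" "\<bar>pv2 s0\<bar> \<le> D"
    and Emax_def: "Emax = Bm\<^sup>2 + (m1 + m2) * D\<^sup>2"
    and Wm_def: "Wm = 1 + Emax"
    and vm_def: "vm = 1 + Emax / m1 + Emax / m2"
    and Tm_def: "Tm = 3 / c"
    and rho_def: "rho = (1 - b) / 2"
    and R_def: "R = vm + Wm"
    and dl_def: "dl = rho / R"
    and mu_def: "mu = min (a / 2) rho"
    and LF_def: "LF = (m1 / (a / 2) + m2 / rho) * vm * R"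
    and CW_def: "CW = LF * Tm + 2 * (m1 + m2) * vm"
    and C1_def: "C1 = 2 * m1 * vm + 2 * Wm"
    and C2_def: "C2 = (2 * CW * Wm + 2 * m1 * C1 * vm) / (m2 * c)"
    and Xe_def: "Xe = Wm * Tm"
    and Cp_def: "Cp = (C1 + C2) / (2 * mu) + vm * Xe / (2 * mu\<^sup>2) + Wm / (2 * mu)"
    and sm1: "eps * Wm * Tm \<le> mu"
    and sm2: "eps * Wm \<le> c / 16"
    and sm3: "eps * C1 \<le> c / 2"
    and sm4: "eps * C2 \<le> c / 2"
    and sm5: "eps\<^sup>2 * m2 \<le> 1 / 2"
begin

abbreviation "M \<equiv> 1 / eps\<^sup>2"
abbreviation "ev k \<equiv> events M m1 m2 s0 k"
abbreviation "tt k \<equiv> fst (ev k)"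
abbreviation "SS k \<equiv> snd (ev k)"
abbreviation "s1 \<equiv> \<bar>pv1 s0\<bar>"
abbreviation "s2 \<equiv> \<bar>pv2 s0\<bar>"
abbreviation "X0 \<equiv> pX s0"
abbreviation "E0 \<equiv> en M m1 m2 s0"

lemma Mpos: "M > 0" using eps by simp

lemma Emax_nn: "Emax \<ge> 0" using Emax_def m1 m2 by simp
lemma Wm_pos: "Wm \<ge> 1" using Wm_def Emax_nn by simp
lemma vm_pos: "vm \<ge> 1" using vm_def Emax_nn m1 m2 by simp
lemma rho_pos: "rho > 0" using rho_def b by simp
lemma R_pos: "R > 0" using R_def Wm_pos vm_pos by simp
lemma dl_pos: "dl > 0" using dl_def rho_pos R_pos by simp
lemma mu_pos: "mu > 0" using mu_def rho_pos a by simp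
lemma mu_le: "mu \<le> a / 2" "mu \<le> rho" using mu_def by simp_all
lemma Tm_pos: "Tm > 0" using Tm_def c by simp

lemma en_alt: "en M m1 m2 s = (pV s / eps)\<^sup>2 + m1 * (pv1 s)\<^sup>2 + m2 * (pv2 s)\<^sup>2"
  unfolding en_def by (simp add: power_divide)

lemma E0_le: "E0 \<le> Emax"
proof -
  have "(pV s0 / eps)\<^sup>2 \<le> Bm\<^sup>2" using W0 by (metis abs_le_square_iff abs_of_nonneg Bm)
  moreover have "(pv1 s0)\<^sup>2 \<le> D\<^sup>2" using v10 by (metis abs_le_square_iff abs_of_nonneg c cD order.trans less_imp_le)
  moreover have "(pv2 s0)\<^sup>2 \<le> D\<^sup>2" using v20 by (metis abs_le_square_iff abs_of_nonneg c cD order.trans less_imp_le)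
  ultimately have "(pV s0 / eps)\<^sup>2 + m1 * (pv1 s0)\<^sup>2 + m2 * (pv2 s0)\<^sup>2 \<le> Bm\<^sup>2 + m1 * D\<^sup>2 + m2 * D\<^sup>2"
    using m1 m2 by (simp add: add_mono mult_left_mono)
  then show ?thesis unfolding en_alt Emax_def by (simp add: algebra_simps)
qed

lemma en_bounds:
  assumes "en M m1 m2 s = E0"
  shows "\<bar>pV s\<bar> \<le> eps * Wm" "\<bar>pV s / eps\<bar> \<le> Wm" "\<bar>pv1 s\<bar> \<le> vm" "\<bar>pv2 s\<bar> \<le> vm"
proof -
  have e: "(pV s / eps)\<^sup>2 + m1 * (pv1 s)\<^sup>2 + m2 * (pv2 s)\<^sup>2 \<le> Emax"
    using assms E0_le en_alt by simp
  have nn: "0 \<le> (pV s / eps)\<^sup>2" "0 \<le> m1 * (pv1 s)\<^sup>2" "0 \<le> m2 * (pv2 s)\<^sup>2"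
    using m1 m2 by simp_all
  have "(pV s / eps)\<^sup>2 \<le> Emax" using e nn by linarith
  then show W: "\<bar>pV s / eps\<bar> \<le> Wm" using sq_bound Wm_def by blast
  then show "\<bar>pV s\<bar> \<le> eps * Wm" using eps by (simp add: abs_divide divide_le_eq mult.commute)
  have "m1 * (pv1 s)\<^sup>2 \<le> Emax" using e nn by linarith
  then have "(pv1 s)\<^sup>2 \<le> Emax / m1" using m1 by (simp add: le_divide_eq mult.commute)
  then have "\<bar>pv1 s\<bar> \<le> 1 + Emax / m1" using sq_bound by blast
  moreover have "Emax / m2 \<ge> 0" using Emax_nn m2 by simp
  ultimately show "\<bar>pv1 s\<bar> \<le> vm" using vm_def by simp
  have "m2 * (pv2 s)\<^sup>2 \<le> Emax" using e nn by linarith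
  then have "(pv2 s)\<^sup>2 \<le> Emax / m2" using m2 by (simp add: le_divide_eq mult.commute)
  then have "\<bar>pv2 s\<bar> \<le> 1 + Emax / m2" using sq_bound by blast
  moreover have "Emax / m1 \<ge> 0" using Emax_nn m1 by simp
  ultimately show "\<bar>pv2 s\<bar> \<le> vm" using vm_def by simp
qed

lemma SS_en: "en M m1 m2 (SS k) = E0"
  using events_en[of M m1 m2 s0 k] Mpos m1 m2 by simp

lemma SS_ordp: "ordp (SS k)" using events_ordp s0ord by blast

lemma tt_nonneg: "tt k \<ge> 0" using events_nonneg s0ord by blast

lemma tt_mono: "j \<le> i \<Longrightarrow> tt j \<le> tt i" using events_mono s0ord by blast

lemma s1_le: "s1 \<le> vm" "s2 \<le> vm"
  using en_bounds[of s0] by simp_all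

lemma X_drift: "\<bar>pX (SS k) - X0\<bar> \<le> eps * Wm * tt k"
proof (induction k)
  case 0 then show ?case by simp
next
  case (Suc k)
  show ?case
  proof (cases "next_delay (SS k)")
    case None then show ?thesis using Suc by (simp add: events_None)
  next
    case (Some d)
    have d: "d \<ge> 0" using nd_nonneg[OF SS_ordp Some] .
    have V: "\<bar>pV (SS k)\<bar> \<le> eps * Wm" using en_bounds(1)[OF SS_en] .
    have "\<bar>pV (SS k) * d\<bar> \<le> eps * Wm * d" using V d by (simp add: abs_mult mult_right_mono)
    then show ?thesis using events_Some[OF Some] Suc by (simp add: algebra_simps)
  qed
qed

definition Xrng :: "real \<Rightarrow> bool" where "Xrng x \<longleftrightarrow> a / 2 \<le> x \<and> x \<le> 1 - rho"

lemma Xrng_of: assumes "\<bar>x - X0\<bar> \<le> eps * Wm * Tm" shows "Xrng x"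
proof -
  have "\<bar>x - X0\<bar> \<le> mu" using assms sm1 by simp
  then show ?thesis unfolding Xrng_def using mu_le X0a X0b rho_def by auto
qed

lemma Xrng_pos: "Xrng x \<Longrightarrow> 0 < x \<and> x < 1 \<and> mu \<le> x \<and> rho \<le> 1 - x"
  unfolding Xrng_def using a rho_pos mu_le by auto

lemma X_rng: assumes "tt k \<le> Tm" shows "Xrng (pX (SS k))"
proof -
  have "eps * Wm * tt k \<le> eps * Wm * Tm" using assms eps Wm_pos by simp
  then show ?thesis using X_drift[of k] Xrng_of by auto
qed

end



context traj
begin

lemma Fq_fly:
  assumes "ordp s" "Xrng (pX s)" "Xrng (pX s + pV s * d)" "d \<ge> 0" "en M m1 m2 s = E0"
  shows "\<bar>Fq M m1 m2 (fly s d) - Fq M m1 m2 s\<bar> \<le> LF * d"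
proof -
  have "eps * Wm \<le> 1 * Wm" by (rule mult_right_mono) (use eps1 Wm_pos in auto)
  then have V: "\<bar>pV s\<bar> \<le> Wm" using en_bounds(1)[OF assms(5)] by simp
  have v1: "\<bar>pv1 s\<bar> \<le> vm" and v2: "\<bar>pv2 s\<bar> \<le> vm" using en_bounds[OF assms(5)] by auto
  have o: "0 \<le> px1 s" "px1 s \<le> pX s" "pX s \<le> px2 s" "px2 s \<le> 1" using assms(1) ordp_def by auto
  have X: "pX s > 0" "pX s < 1" "a / 2 \<le> pX s + pV s * d" "rho \<le> 1 - (pX s + pV s * d)"
    using assms(2,3) Xrng_pos Xrng_def by auto
  have t1: "\<bar>(px1 s + pv1 s * d) / (pX s + pV s * d) - px1 s / pX s\<bar> \<le> d * (vm + Wm) / (a / 2)"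
    by (rule frac_diff_bound[where ymin = "a / 2" and P = vm and Q = Wm]) (use X o v1 V assms(4) a in auto)
  have t2: "\<bar>((1 - px2 s) + (- pv2 s) * d) / ((1 - pX s) + (- pV s) * d) - (1 - px2 s) / (1 - pX s)\<bar>
      \<le> d * (vm + Wm) / rho"
    by (rule frac_diff_bound[where ymin = rho and P = vm and Q = Wm and y = "1 - px2 s" and w = "- pv2 s"
       and Y = "1 - pX s" and Y' = "(1 - pX s) + (- pV s) * d" and U = "- pV s" and d = d]) (use X o v2 V assms(4) rho_pos in auto)
  define A1 where "A1 = (px1 s + pv1 s * d) / (pX s + pV s * d) - px1 s / pX s"
  define A2 where "A2 = ((1 - px2 s) + (- pv2 s) * d) / ((1 - pX s) + (- pV s) * d) - (1 - px2 s) / (1 - pX s)"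
  have e: "Fq M m1 m2 (fly s d) - Fq M m1 m2 s = m1 * pv1 s * A1 + m2 * pv2 s * A2"
    unfolding Fq_def A1_def A2_def by (simp add: algebra_simps)
  have "\<bar>m1 * pv1 s * A1\<bar> \<le> m1 * vm * (d * (vm + Wm) / (a / 2))"
    unfolding abs_mult using m1 v1 t1 A1_def by (intro mult_mono) auto
  moreover have "\<bar>m2 * pv2 s * A2\<bar> \<le> m2 * vm * (d * (vm + Wm) / rho)"
    unfolding abs_mult using m2 v2 t2 A2_def by (intro mult_mono) auto
  moreover have "m1 * vm * (d * (vm + Wm) / (a / 2)) + m2 * vm * (d * (vm + Wm) / rho) = LF * d"
    unfolding LF_def R_def by (simp add: field_simps)
  ultimately show ?thesis unfolding e by linarith
qed

lemma F_drift: "tt k \<le> Tm \<Longrightarrow> \<bar>Fq M m1 m2 (SS k) - Fq M m1 m2 s0\<bar> \<le> LF * tt k"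
proof (induction k)
  case 0 then show ?case by simp
next
  case (Suc k)
  show ?case
  proof (cases "next_delay (SS k)")
    case None then show ?thesis using Suc by (simp add: events_None)
  next
    case (Some d)
    note E = events_Some[OF Some]
    have d: "d \<ge> 0" using nd_nonneg[OF SS_ordp Some] .
    have tk: "tt k \<le> Tm" using Suc.prems E d by simp
    have r1: "Xrng (pX (SS k))" using X_rng[OF tk] .
    have r2: "Xrng (pX (SS (Suc k)))" using X_rng[OF Suc.prems] .
    then have r2': "Xrng (pX (SS k) + pV (SS k) * d)" using E by simp
    have f: "\<bar>Fq M m1 m2 (fly (SS k) d) - Fq M m1 m2 (SS k)\<bar> \<le> LF * d"
      by (rule Fq_fly[OF SS_ordp r1 r2' d SS_en])
    have "Fq M m1 m2 (SS (Suc k)) = Fq M m1 m2 (fly (SS k) d)"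
      using E Fq_resolve[OF Mpos m1 m2] r2' Xrng_pos by simp
    then have "Fq M m1 m2 (SS (Suc k)) - Fq M m1 m2 s0 =
       (Fq M m1 m2 (fly (SS k) d) - Fq M m1 m2 (SS k)) + (Fq M m1 m2 (SS k) - Fq M m1 m2 s0)" by simp
    then have "\<bar>Fq M m1 m2 (SS (Suc k)) - Fq M m1 m2 s0\<bar> \<le> LF * d + LF * tt k"
      using f Suc.IH[OF tk] abs_triangle_ineq[of "Fq M m1 m2 (fly (SS k) d) - Fq M m1 m2 (SS k)"
        "Fq M m1 m2 (SS k) - Fq M m1 m2 s0"] by linarith
    then show ?thesis using E by (simp add: algebra_simps)
  qed
qed

lemma W_alt: "pV s / eps = eps * (Fq M m1 m2 s - m1 * pv1 s * (px1 s / pX s)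
   - m2 * pv2 s * ((1 - px2 s) / (1 - pX s)))"
  unfolding Fq_def using eps by (simp add: field_simps power2_eq_square)

lemma term_bound:
  assumes "ordp s" "0 < pX s" "pX s < 1" "en M m1 m2 s = E0"
  shows "\<bar>m1 * pv1 s * (px1 s / pX s)\<bar> \<le> m1 * vm" "\<bar>m2 * pv2 s * ((1 - px2 s) / (1 - pX s))\<bar> \<le> m2 * vm"
proof -
  have o: "0 \<le> px1 s" "px1 s \<le> pX s" "pX s \<le> px2 s" "px2 s \<le> 1" using assms(1) ordp_def by auto
  define q1 where "q1 = px1 s / pX s"
  define q2 where "q2 = (1 - px2 s) / (1 - pX s)"
  have q1: "\<bar>q1\<bar> \<le> 1" using o assms unfolding q1_def by (simp add: abs_divide divide_le_eq_1)
  have q2: "\<bar>q2\<bar> \<le> 1" using o assms unfolding q2_def by (simp add: abs_divide divide_le_eq_1)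
  have "\<bar>pv1 s\<bar> * \<bar>q1\<bar> \<le> vm * 1"
    by (rule mult_mono) (use q1 en_bounds(3)[OF assms(4)] vm_pos in auto)
  then have "m1 * (\<bar>pv1 s\<bar> * \<bar>q1\<bar>) \<le> m1 * vm" using m1 by simp
  then show "\<bar>m1 * pv1 s * (px1 s / pX s)\<bar> \<le> m1 * vm"
    using m1 unfolding q1_def[symmetric] abs_mult by (simp add: mult.assoc)
  have "\<bar>pv2 s\<bar> * \<bar>q2\<bar> \<le> vm * 1"
    by (rule mult_mono) (use q2 en_bounds(4)[OF assms(4)] vm_pos in auto)
  then have "m2 * (\<bar>pv2 s\<bar> * \<bar>q2\<bar>) \<le> m2 * vm" using m2 by simp
  then show "\<bar>m2 * pv2 s * ((1 - px2 s) / (1 - pX s))\<bar> \<le> m2 * vm"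
    using m2 unfolding q2_def[symmetric] abs_mult by (simp add: mult.assoc)
qed

lemma abs5: fixes x y z u v A B C D1 E :: real
  assumes "\<bar>x\<bar> \<le> A" "\<bar>y\<bar> \<le> B" "\<bar>z\<bar> \<le> C" "\<bar>u\<bar> \<le> D1" "\<bar>v\<bar> \<le> E"
  shows "\<bar>x - y - z + u + v\<bar> \<le> A + B + C + D1 + E"
  using assms unfolding abs_le_iff by linarith

lemma W_err: assumes "tt k \<le> Tm" shows "\<bar>pV (SS k) / eps - pV s0 / eps\<bar> \<le> CW * eps"
proof -
  have r: "Xrng (pX (SS k))" using X_rng[OF assms] .
  have r0: "Xrng X0" using Xrng_of Tm_pos eps Wm_pos by simp
  note tb = term_bound[OF SS_ordp _ _ SS_en] term_bound[OF s0ord _ _ refl]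
  have LF0: "LF \<ge> 0" unfolding LF_def using m1 m2 a rho_pos vm_pos R_pos by simp
  have "LF * tt k \<le> LF * Tm" using assms LF0 by (rule mult_left_mono)
  then have f: "\<bar>Fq M m1 m2 (SS k) - Fq M m1 m2 s0\<bar> \<le> LF * Tm"
    using F_drift[OF assms] by linarith
  have "\<bar>(Fq M m1 m2 (SS k) - m1 * pv1 (SS k) * (px1 (SS k) / pX (SS k))
   - m2 * pv2 (SS k) * ((1 - px2 (SS k)) / (1 - pX (SS k)))) - (Fq M m1 m2 s0 - m1 * pv1 s0 * (px1 s0 / X0)
   - m2 * pv2 s0 * ((1 - px2 s0) / (1 - X0)))\<bar> \<le> CW"
  proof -
    have x: "0 < pX (SS k)" "pX (SS k) < 1" "0 < X0" "X0 < 1" using Xrng_pos[OF r] Xrng_pos[OF r0] by auto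
    note t = tb(1)[OF x(1,2)] tb(2)[OF x(1,2)] tb(3)[OF x(3,4)] tb(4)[OF x(3,4)]
    show ?thesis unfolding CW_def using abs5[OF f t] by (simp add: algebra_simps)
  qed
  then show ?thesis unfolding W_alt[of "SS k"] W_alt[of s0]
    using eps by (simp add: right_diff_distrib[symmetric] abs_mult mult.commute)
qed

end



lemma v2_arith:
  fixes W W0 v1 v10 v2 v20 m1 m2 CW C1 Wm vm c e :: real
  assumes en: "W\<^sup>2 + m1 * v1\<^sup>2 + m2 * v2\<^sup>2 = W0\<^sup>2 + m1 * v10\<^sup>2 + m2 * v20\<^sup>2"
    and "\<bar>W - W0\<bar> \<le> CW * e" "\<bar>W\<bar> \<le> Wm" "\<bar>W0\<bar> \<le> Wm"
    and "\<bar>\<bar>v1\<bar> - \<bar>v10\<bar>\<bar> \<le> C1 * e" "\<bar>v1\<bar> \<le> vm" "\<bar>v10\<bar> \<le> vm"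
    and "c \<le> \<bar>v20\<bar>" "m1 > 0" "m2 > 0" "c > 0"
  shows "\<bar>\<bar>v2\<bar> - \<bar>v20\<bar>\<bar> \<le> (2 * CW * Wm + 2 * m1 * C1 * vm) / (m2 * c) * e"
proof -
  have e1: "m2 * (v2\<^sup>2 - v20\<^sup>2) = (W0 - W) * (W0 + W) + m1 * ((\<bar>v10\<bar> - \<bar>v1\<bar>) * (\<bar>v10\<bar> + \<bar>v1\<bar>))"
    using en by (simp add: algebra_simps power2_eq_square abs_mult_self_eq)
  have "0 \<le> CW * e" using assms(2) abs_ge_zero order.trans by blast
  have "0 \<le> C1 * e" using assms(5) abs_ge_zero order.trans by blast
  have "\<bar>W0 + W\<bar> \<le> 2 * Wm" using abs_triangle_ineq[of W0 W] assms(3,4) by linarith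
  then have b1: "\<bar>(W0 - W) * (W0 + W)\<bar> \<le> CW * e * (2 * Wm)"
    unfolding abs_mult using assms \<open>0 \<le> CW * e\<close> \<open>0 \<le> C1 * e\<close> by (intro mult_mono) (auto simp: abs_minus_commute)
  have b2: "\<bar>(\<bar>v10\<bar> - \<bar>v1\<bar>) * (\<bar>v10\<bar> + \<bar>v1\<bar>)\<bar> \<le> C1 * e * (2 * vm)"
    unfolding abs_mult using assms \<open>0 \<le> CW * e\<close> \<open>0 \<le> C1 * e\<close> by (intro mult_mono) (auto simp: abs_minus_commute)
  have t: "\<bar>(W0 - W) * (W0 + W) + m1 * ((\<bar>v10\<bar> - \<bar>v1\<bar>) * (\<bar>v10\<bar> + \<bar>v1\<bar>))\<bar>
     \<le> \<bar>(W0 - W) * (W0 + W)\<bar> + \<bar>m1 * ((\<bar>v10\<bar> - \<bar>v1\<bar>) * (\<bar>v10\<bar> + \<bar>v1\<bar>))\<bar>"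
    by (rule abs_triangle_ineq)
  have t2: "\<bar>m1 * ((\<bar>v10\<bar> - \<bar>v1\<bar>) * (\<bar>v10\<bar> + \<bar>v1\<bar>))\<bar>
      = m1 * \<bar>(\<bar>v10\<bar> - \<bar>v1\<bar>) * (\<bar>v10\<bar> + \<bar>v1\<bar>)\<bar>" using assms(9) by (simp add: abs_mult)
  have t3: "m1 * \<bar>(\<bar>v10\<bar> - \<bar>v1\<bar>) * (\<bar>v10\<bar> + \<bar>v1\<bar>)\<bar> \<le> m1 * (C1 * e * (2 * vm))"
    using b2 assms(9) by (intro mult_left_mono) auto
  have "\<bar>m2 * (v2\<^sup>2 - v20\<^sup>2)\<bar> \<le> CW * e * (2 * Wm) + m1 * (C1 * e * (2 * vm))"
    unfolding e1 using t t2 t3 b1 by linarith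
  moreover have "\<bar>m2 * (v2\<^sup>2 - v20\<^sup>2)\<bar> = m2 * \<bar>v2\<^sup>2 - v20\<^sup>2\<bar>" using assms(10) by (simp add: abs_mult)
  moreover have "CW * e * (2 * Wm) + m1 * (C1 * e * (2 * vm)) = (2 * CW * Wm + 2 * m1 * C1 * vm) * e"
    by (simp add: algebra_simps)
  ultimately have m: "m2 * \<bar>v2\<^sup>2 - v20\<^sup>2\<bar> \<le> (2 * CW * Wm + 2 * m1 * C1 * vm) * e"
    by linarith
  have f: "\<bar>v2\<^sup>2 - v20\<^sup>2\<bar> = \<bar>\<bar>v2\<bar> - \<bar>v20\<bar>\<bar> * (\<bar>v2\<bar> + \<bar>v20\<bar>)"
  proof -
    have "v2\<^sup>2 - v20\<^sup>2 = (\<bar>v2\<bar> - \<bar>v20\<bar>) * (\<bar>v2\<bar> + \<bar>v20\<bar>)"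
      by (simp add: algebra_simps power2_eq_square abs_mult_self_eq)
    then show ?thesis by (simp add: abs_mult)
  qed
  have "\<bar>\<bar>v2\<bar> - \<bar>v20\<bar>\<bar> * c \<le> \<bar>\<bar>v2\<bar> - \<bar>v20\<bar>\<bar> * (\<bar>v2\<bar> + \<bar>v20\<bar>)"
    using assms(8) by (intro mult_left_mono) auto
  then have "m2 * (\<bar>\<bar>v2\<bar> - \<bar>v20\<bar>\<bar> * c) \<le> m2 * (\<bar>\<bar>v2\<bar> - \<bar>v20\<bar>\<bar> * (\<bar>v2\<bar> + \<bar>v20\<bar>))"
    by (rule mult_left_mono) (use assms(10) in simp)
  then have "m2 * (\<bar>\<bar>v2\<bar> - \<bar>v20\<bar>\<bar> * c) \<le> (2 * CW * Wm + 2 * m1 * C1 * vm) * e"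
    using m[unfolded f] by linarith
  then have "\<bar>\<bar>v2\<bar> - \<bar>v20\<bar>\<bar> * (m2 * c) \<le> (2 * CW * Wm + 2 * m1 * C1 * vm) * e"
    by (simp add: algebra_simps)
  moreover have pos: "0 < m2 * c" using assms(10,11) by simp
  ultimately have "\<bar>\<bar>v2\<bar> - \<bar>v20\<bar>\<bar> \<le> ((2 * CW * Wm + 2 * m1 * C1 * vm) * e) / (m2 * c)"
    by (simp only: pos_le_divide_eq[OF pos])
  then show ?thesis by (simp only: times_divide_eq_left)
qed


lemma cr_pos:
  fixes M m V v c :: real
  assumes "2 * m \<le> M" "m > 0" "v \<le> - c / 2" "\<bar>V\<bar> \<le> c / 16" "c > 0"
  shows "((m - M) * v + 2 * M * V) / (m + M) > 0"
proof -
  have M: "M > 0" using assms by simp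
  have "(M / 2) * (c / 2) \<le> (M - m) * (- v)"
    by (rule mult_mono) (use assms in auto)
  moreover have "M * (- (c / 16)) \<le> M * V" using assms M by (intro mult_left_mono) auto
  ultimately have "(m - M) * v + 2 * M * V \<ge> M * c / 8" by (simp add: algebra_simps)
  moreover have "M * c / 8 > 0" using M assms by simp
  ultimately have n: "0 < (m - M) * v + 2 * M * V" by linarith
  have "0 < m + M" using M assms by simp
  with n show ?thesis by (rule divide_pos_pos)
qed

lemma cl_bound:
  fixes M m V s :: real
  assumes "M > 0" "m > 0" "s \<ge> 0"
  shows "\<bar>((m - M) * s + 2 * M * V) / (m + M) + s\<bar> \<le> 2 * m * s / M + 2 * \<bar>V\<bar>"
proof -
  have q: "m + M > 0" using assms by simp
  have e0: "((m - M) * s + 2 * M * V) / (m + M) + s = (2 * m * s + 2 * M * V) / (m + M)"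
    using q by (simp add: field_simps)
  have e: "((m - M) * s + 2 * M * V) / (m + M) + s = (2 * m * s) / (m + M) + 2 * V * (M / (m + M))"
    unfolding e0 by (simp add: add_divide_distrib)
  have b1: "\<bar>(2 * m * s) / (m + M)\<bar> \<le> 2 * m * s / M"
    using assms q by (simp add: abs_divide frac_le)
  have q1: "\<bar>M / (m + M)\<bar> \<le> 1" using q assms by (simp add: abs_divide divide_le_eq_1)
  have "\<bar>2 * V * (M / (m + M))\<bar> = 2 * \<bar>V\<bar> * \<bar>M / (m + M)\<bar>" by (simp add: abs_mult)
  also have "\<dots> \<le> 2 * \<bar>V\<bar> * 1" using q1 by (intro mult_left_mono) auto
  finally have b2: "\<bar>2 * V * (M / (m + M))\<bar> \<le> 2 * \<bar>V\<bar>" by simp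
  have "\<bar>(2 * m * s) / (m + M) + 2 * V * (M / (m + M))\<bar> \<le> \<bar>(2 * m * s) / (m + M)\<bar> + \<bar>2 * V * (M / (m + M))\<bar>"
    by (rule abs_triangle_ineq)
  also have "\<dots> \<le> 2 * m * s / M + 2 * \<bar>V\<bar>" by (rule add_mono[OF b1 b2])
  finally show ?thesis unfolding e .
qed

lemma nd_some_of: "pv1 s < 0 \<or> pv1 s > pV s \<Longrightarrow> \<exists>d. next_delay s = Some d"
  unfolding next_delay_def event_delays_def by auto

context traj
begin

lemma M2: "2 * m2 \<le> M" "2 * m1 \<le> M \<or> True"
proof -
  have "eps\<^sup>2 * m2 \<le> 1 / 2" using sm5 .
  then have "m2 \<le> 1 / (2 * eps\<^sup>2)" using eps by (simp add: field_simps)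
  then show "2 * m2 \<le> M" by (simp add: field_simps)
qed simp

lemma v2_err: assumes "tt k \<le> Tm" "\<bar>\<bar>pv1 (SS k)\<bar> - s1\<bar> \<le> C1 * eps"
  shows "\<bar>\<bar>pv2 (SS k)\<bar> - s2\<bar> \<le> C2 * eps"
proof -
  have en: "(pV (SS k) / eps)\<^sup>2 + m1 * (pv1 (SS k))\<^sup>2 + m2 * (pv2 (SS k))\<^sup>2
          = (pV s0 / eps)\<^sup>2 + m1 * (pv1 s0)\<^sup>2 + m2 * (pv2 s0)\<^sup>2"
    using SS_en[of k] en_alt by simp
  show ?thesis unfolding C2_def
    by (rule v2_arith[OF en W_err[OF assms(1)] en_bounds(2)[OF SS_en] en_bounds(2)[OF refl]
        assms(2) en_bounds(3)[OF SS_en] en_bounds(3)[OF refl] v20(1) m1 m2 c])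
qed

lemma reg:
  assumes "tt k \<le> Tm" "\<bar>\<bar>pv1 (SS k)\<bar> - s1\<bar> \<le> C1 * eps"
  shows "Xrng (pX (SS k))" "\<bar>pV (SS k)\<bar> \<le> c / 16" "c / 2 \<le> \<bar>pv2 (SS k)\<bar>" "c / 2 \<le> \<bar>pv1 (SS k)\<bar>"
proof -
  show "Xrng (pX (SS k))" using X_rng[OF assms(1)] .
  show "\<bar>pV (SS k)\<bar> \<le> c / 16" using en_bounds(1)[OF SS_en, of k] sm2 by linarith
  have "C2 * eps \<le> c / 2" using sm4 by (simp add: mult.commute)
  then show "c / 2 \<le> \<bar>pv2 (SS k)\<bar>" using v2_err[OF assms] v20 unfolding abs_le_iff by linarith
  have "C1 * eps \<le> c / 2" using sm3 by (simp add: mult.commute)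
  then show "c / 2 \<le> \<bar>pv1 (SS k)\<bar>" using assms(2) v10 unfolding abs_le_iff by linarith
qed

lemma V_small: "en M m1 m2 s = E0 \<Longrightarrow> \<bar>pV s\<bar> \<le> c / 16"
  using en_bounds(1) sm2 by fastforce

definition gap2 :: "pst \<Rightarrow> real" where
  "gap2 s = (if pv2 s < 0 then px2 s - pX s else 1 - px2 s)"

lemma p2_step:
  assumes nd: "next_delay S = Some d" and o: "ordp S" and en: "en M m1 m2 S = E0"
    and v2: "c / 2 \<le> \<bar>pv2 S\<bar>" and xr: "Xrng (pX S + pV S * d)"
    and enu: "en M m1 m2 u = E0" and u: "pX u = pX (fly S d)" "px2 u = px2 (fly S d)" "pv2 u = pv2 S"
  shows "gap2 S - R * d \<le> gap2 (fly S d)"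
    and "gap2 (fly S d) = 0 \<Longrightarrow> rho \<le> gap2 (step2 M m2 u)"
    and "gap2 (fly S d) \<noteq> 0 \<Longrightarrow> gap2 (step2 M m2 u) = gap2 (fly S d)"
    and "(pv2 S < pV S \<and> px2 (fly S d) = pX (fly S d)) \<or> (pv2 S > 0 \<and> px2 (fly S d) = 1)
          \<Longrightarrow> gap2 (fly S d) = 0"
proof -
  have d: "d \<ge> 0" using nd_nonneg[OF o nd] .
  have V: "\<bar>pV S\<bar> \<le> c / 16" using V_small[OF en] .
  have Vu: "\<bar>pV u\<bar> \<le> c / 16" using V_small[OF enu] .
  have VW: "\<bar>pV S\<bar> \<le> Wm"
  proof -
    have "eps * Wm \<le> 1 * Wm" by (rule mult_right_mono) (use eps1 Wm_pos in auto)
    then show ?thesis using en_bounds(1)[OF en] by simp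
  qed
  have v2m: "\<bar>pv2 S\<bar> \<le> vm" using en_bounds(4)[OF en] .
  have xr': "rho \<le> 1 - pX (fly S d)" "pX (fly S d) < 1" using xr Xrng_pos by auto
  consider (neg) "pv2 S \<le> - c / 2" | (pos) "pv2 S \<ge> c / 2" using v2 c by linarith
  then have "(gap2 S - R * d \<le> gap2 (fly S d))
    \<and> (gap2 (fly S d) = 0 \<longrightarrow> rho \<le> gap2 (step2 M m2 u))
    \<and> (gap2 (fly S d) \<noteq> 0 \<longrightarrow> gap2 (step2 M m2 u) = gap2 (fly S d))
    \<and> ((pv2 S < pV S \<and> px2 (fly S d) = pX (fly S d)) \<or> (pv2 S > 0 \<and> px2 (fly S d) = 1)
          \<longrightarrow> gap2 (fly S d) = 0)"
  proof cases
    case neg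
    have lt: "pv2 S < 0" "pv2 S < pV S" "pv2 u < pV u" using neg V Vu c u by auto
    have g: "gap2 (fly S d) = px2 S + pv2 S * d - (pX S + pV S * d)" "gap2 S = px2 S - pX S"
      unfolding gap2_def using lt by simp_all
    have "(pV S - pv2 S) * d \<le> R * d"
      using V v2m VW d unfolding R_def by (intro mult_right_mono) auto
    then have A: "gap2 S - R * d \<le> gap2 (fly S d)" unfolding g by (simp add: algebra_simps)
    have B: "gap2 (fly S d) = 0 \<longrightarrow> rho \<le> gap2 (step2 M m2 u)"
    proof
      assume "gap2 (fly S d) = 0"
      then have eq: "px2 u = pX u" using g u by simp
      then have st: "step2 M m2 u = collide_right M m2 u" unfolding step2_def using lt by simp
      have "pv2 (collide_right M m2 u) > 0"
        using cr_pos[OF M2(1) m2 _ Vu c, of "pv2 u"] neg u by simp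
      then have "gap2 (step2 M m2 u) = 1 - px2 u" unfolding st gap2_def by simp
      then show "rho \<le> gap2 (step2 M m2 u)" using eq u xr' by simp
    qed
    have C: "gap2 (fly S d) \<noteq> 0 \<longrightarrow> gap2 (step2 M m2 u) = gap2 (fly S d)"
    proof
      assume "gap2 (fly S d) \<noteq> 0"
      then have "px2 u \<noteq> pX u" using g u by simp
      then have "step2 M m2 u = u" unfolding step2_def using lt u by auto
      then show "gap2 (step2 M m2 u) = gap2 (fly S d)" unfolding gap2_def using u lt by simp
    qed
    have D: "(pv2 S < pV S \<and> px2 (fly S d) = pX (fly S d)) \<or> (pv2 S > 0 \<and> px2 (fly S d) = 1)
          \<longrightarrow> gap2 (fly S d) = 0" using lt g by auto
    show ?thesis using A B C D by blast
  next
    case pos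
    have gt: "pv2 S > 0" "\<not> pv2 S < pV S" "\<not> pv2 u < pV u" using pos V Vu c u by auto
    have g: "gap2 (fly S d) = 1 - (px2 S + pv2 S * d)" "gap2 S = 1 - px2 S"
      unfolding gap2_def using gt by simp_all
    have "pv2 S * d \<le> R * d"
      using v2m VW d unfolding R_def by (intro mult_right_mono) auto
    then have A: "gap2 S - R * d \<le> gap2 (fly S d)" unfolding g by (simp add: algebra_simps)
    have B: "gap2 (fly S d) = 0 \<longrightarrow> rho \<le> gap2 (step2 M m2 u)"
    proof
      assume "gap2 (fly S d) = 0"
      then have eq: "px2 u = 1" using g u by simp
      have ne: "px2 u \<noteq> pX u" using eq u xr' by auto
      then have st: "step2 M m2 u = u\<lparr>pv2 := - pv2 u\<rparr>" unfolding step2_def using gt eq u by simp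
      have "gap2 (step2 M m2 u) = 1 - pX u" unfolding st gap2_def using gt u eq by simp
      then show "rho \<le> gap2 (step2 M m2 u)" using u xr' by simp
    qed
    have C: "gap2 (fly S d) \<noteq> 0 \<longrightarrow> gap2 (step2 M m2 u) = gap2 (fly S d)"
    proof
      assume "gap2 (fly S d) \<noteq> 0"
      then have "px2 u \<noteq> 1" using g u by simp
      then have "step2 M m2 u = u" unfolding step2_def using gt by auto
      then show "gap2 (step2 M m2 u) = gap2 (fly S d)" unfolding gap2_def using u gt by simp
    qed
    have D: "(pv2 S < pV S \<and> px2 (fly S d) = pX (fly S d)) \<or> (pv2 S > 0 \<and> px2 (fly S d) = 1)
          \<longrightarrow> gap2 (fly S d) = 0" using gt g by auto
    show ?thesis using A B C D by blast
  qed
  then show "gap2 S - R * d \<le> gap2 (fly S d)"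
    and "gap2 (fly S d) = 0 \<Longrightarrow> rho \<le> gap2 (step2 M m2 u)"
    and "gap2 (fly S d) \<noteq> 0 \<Longrightarrow> gap2 (step2 M m2 u) = gap2 (fly S d)"
    and "(pv2 S < pV S \<and> px2 (fly S d) = pX (fly S d)) \<or> (pv2 S > 0 \<and> px2 (fly S d) = 1)
          \<Longrightarrow> gap2 (fly S d) = 0" by blast+
qed

end



context traj
begin

definition ret :: "nat \<Rightarrow> bool" where
  "ret k \<longleftrightarrow> pv1 (SS k) < 0 \<and> 0 < px1 (SS k) \<and>
     (\<exists>d. next_delay (SS k) = Some d \<and> px1 (SS k) + pv1 (SS k) * d = 0)"

definition stP :: "nat \<Rightarrow> bool" where
  "stP k \<longleftrightarrow> k = 0 \<and> px1 (SS k) = 0 \<and> pv1 (SS k) = - s1"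

definition stA :: "nat \<Rightarrow> bool" where
  "stA k \<longleftrightarrow> pv1 (SS k) = s1 \<and> px1 (SS k) = s1 * tt k"

definition stB :: "nat \<Rightarrow> bool" where
  "stB k \<longleftrightarrow> pv1 (SS k) < 0 \<and> \<bar>pv1 (SS k) + s1\<bar> \<le> C1 * eps \<and> 0 < px1 (SS k)
     \<and> px1 (SS k) + c / 2 * tt k \<le> 3 / 2"

definition cnt :: "nat \<Rightarrow> real \<Rightarrow> bool" where
  "cnt k p \<longleftrightarrow> (\<exists>N::nat. \<exists>l. real k \<le> real N + p \<and> dl * (real N - 1) \<le> l \<and> l \<le> tt k
      \<and> rho \<le> gap2 (SS k) + R * (tt k - l))"

definition Inv :: "nat \<Rightarrow> bool" where
  "Inv k \<longleftrightarrow> (stP k \<and> cnt k 0) \<or> (stA k \<and> cnt k 1) \<or> (stB k \<and> cnt k 2)"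

lemma C1_nn: "C1 \<ge> 0" unfolding C1_def using m1 vm_pos Wm_pos by simp

lemma Tm_ge: "1 / c \<le> Tm" unfolding Tm_def using c by (simp add: divide_right_mono)

lemma st_facts:
  assumes "stP k \<or> stA k \<or> stB k"
  shows "tt k \<le> Tm" "\<bar>\<bar>pv1 (SS k)\<bar> - s1\<bar> \<le> C1 * eps"
proof -
  have o: "px1 (SS k) \<le> 1" using SS_ordp[of k] unfolding ordp_def by linarith
  have s1c: "c \<le> s1" using v10 by simp
  have "tt k \<le> Tm \<and> \<bar>\<bar>pv1 (SS k)\<bar> - s1\<bar> \<le> C1 * eps"
  proof (cases "stP k")
    case True
    then show ?thesis using C1_nn eps Tm_pos unfolding stP_def by simp
  next
    case nP: False
    show ?thesis
    proof (cases "stA k")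
      case True
      then have e: "s1 * tt k \<le> 1" "pv1 (SS k) = s1" using o unfolding stA_def by auto
      have "c * tt k \<le> s1 * tt k" using s1c tt_nonneg by (intro mult_right_mono) auto
      then have "c * tt k \<le> 1" using e by linarith
      then have "tt k \<le> 1 / c" using c by (simp add: le_divide_eq mult.commute)
      then show ?thesis using Tm_ge e C1_nn eps by simp
    next
      case False
      then have B: "stB k" using assms nP by blast
      then have "c / 2 * tt k \<le> 3 / 2" unfolding stB_def by linarith
      then have "tt k \<le> 3 / c" using c by (simp add: le_divide_eq mult.commute)
      moreover have "\<bar>\<bar>pv1 (SS k)\<bar> - s1\<bar> = \<bar>pv1 (SS k) + s1\<bar>" using B unfolding stB_def by simp
      ultimately show ?thesis using B Tm_def unfolding stB_def by simp
    qed
  qed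
  then show "tt k \<le> Tm" "\<bar>\<bar>pv1 (SS k)\<bar> - s1\<bar> \<le> C1 * eps" by auto
qed

lemma Inv_st: "Inv k \<Longrightarrow> stP k \<or> stA k \<or> stB k" unfolding Inv_def by blast

lemma Inv_facts: assumes "Inv k"
  shows "tt k \<le> Tm" "\<bar>\<bar>pv1 (SS k)\<bar> - s1\<bar> \<le> C1 * eps"
  using st_facts[OF Inv_st[OF assms]] by auto

lemma Inv_nd: assumes "Inv k" shows "\<exists>d. next_delay (SS k) = Some d"
proof -
  have V: "\<bar>pV (SS k)\<bar> \<le> c / 16" using V_small[OF SS_en] .
  have "pv1 (SS k) < 0 \<or> pv1 (SS k) > pV (SS k)"
    using Inv_st[OF assms] V v10 c unfolding stP_def stA_def stB_def by auto
  then show ?thesis using nd_some_of by blast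
qed

lemma cnt_step:
  assumes "cnt k p" "p \<le> p'" "tt (Suc k) = tt k + d" "d \<ge> 0"
    "gap2 S' \<ge> gap2 (SS k) - R * d"
    "(gap2 S' = 0 \<and> rho \<le> gap2 (SS (Suc k))) \<or> (gap2 (SS (Suc k)) = gap2 S' \<and> p + 1 \<le> p')"
  shows "cnt (Suc k) p'"
proof -
  obtain N l where N: "real k \<le> real N + p" "dl * (real N - 1) \<le> l" "l \<le> tt k"
      "rho \<le> gap2 (SS k) + R * (tt k - l)"
    using assms(1) unfolding cnt_def by blast
  show ?thesis
  proof (cases "gap2 S' = 0 \<and> rho \<le> gap2 (SS (Suc k))")
    case True
    have "rho \<le> R * (tt k + d - l)" using N(4) True assms(5) by (simp add: algebra_simps)
    then have "rho / R \<le> tt k + d - l" using R_pos by (simp add: divide_le_eq mult.commute)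
    then have "dl \<le> tt k + d - l" using dl_def by simp
    then have "dl * (real (Suc N) - 1) \<le> tt k + d" using N(2) by (simp add: algebra_simps)
    moreover have "real (Suc k) \<le> real (Suc N) + p'" using N(1) assms(2) by simp
    ultimately show ?thesis unfolding cnt_def using True assms(3)
      by (intro exI[of _ "Suc N"] exI[of _ "tt k + d"]) simp
  next
    case False
    then have F: "gap2 (SS (Suc k)) = gap2 S'" "p + 1 \<le> p'" using assms(6) by auto
    have "real (Suc k) \<le> real N + p'" using N(1) F(2) by simp
    moreover have "l \<le> tt (Suc k)" using N(3) assms(3,4) by simp
    moreover have "rho \<le> gap2 (SS (Suc k)) + R * (tt (Suc k) - l)"
      using N(4) F(1) assms(3,5) by (simp add: algebra_simps)
    ultimately show ?thesis unfolding cnt_def using N(2) by blast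
  qed
qed

lemma SS_Suc: "next_delay (SS k) = Some d \<Longrightarrow>
   tt (Suc k) = tt k + d \<and> SS (Suc k) = step2 M m2 (step1 M m1 (fly (SS k) d))"
  using events_Some[of M m1 m2 s0 k d] resolve_eq by simp

lemma step_gap:
  assumes nd: "next_delay (SS k) = Some d" and T: "tt (Suc k) \<le> Tm" and v2: "c / 2 \<le> \<bar>pv2 (SS k)\<bar>"
  shows "gap2 (SS k) - R * d \<le> gap2 (fly (SS k) d)"
    and "gap2 (fly (SS k) d) = 0 \<Longrightarrow> rho \<le> gap2 (SS (Suc k))"
    and "gap2 (fly (SS k) d) \<noteq> 0 \<Longrightarrow> gap2 (SS (Suc k)) = gap2 (fly (SS k) d)"
    and "(pv2 (SS k) < pV (SS k) \<and> px2 (fly (SS k) d) = pX (fly (SS k) d))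
         \<or> (pv2 (SS k) > 0 \<and> px2 (fly (SS k) d) = 1) \<Longrightarrow> gap2 (fly (SS k) d) = 0"
proof -
  define u where "u = step1 M m1 (fly (SS k) d)"
  have E: "SS (Suc k) = step2 M m2 u" using SS_Suc[OF nd] u_def by simp
  have xr: "Xrng (pX (SS k) + pV (SS k) * d)" using X_rng[OF T] E u_def by simp
  have enu: "en M m1 m2 u = E0" unfolding u_def using en_step1[OF Mpos m1] SS_en by simp
  have uu: "pX u = pX (fly (SS k) d)" "px2 u = px2 (fly (SS k) d)" "pv2 u = pv2 (SS k)"
    unfolding u_def by simp_all
  note P = p2_step[OF nd SS_ordp SS_en v2 xr enu uu]
  show "gap2 (SS k) - R * d \<le> gap2 (fly (SS k) d)" using P(1) .
  show "gap2 (fly (SS k) d) = 0 \<Longrightarrow> rho \<le> gap2 (SS (Suc k))" using P(2) E by simp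
  show "gap2 (fly (SS k) d) \<noteq> 0 \<Longrightarrow> gap2 (SS (Suc k)) = gap2 (fly (SS k) d)" using P(3) E by simp
  show "(pv2 (SS k) < pV (SS k) \<and> px2 (fly (SS k) d) = pX (fly (SS k) d))
         \<or> (pv2 (SS k) > 0 \<and> px2 (fly (SS k) d) = 1) \<Longrightarrow> gap2 (fly (SS k) d) = 0" using P(4) .
qed

lemma step_cnt:
  assumes nd: "next_delay (SS k) = Some d" and T: "tt (Suc k) \<le> Tm" and v2: "c / 2 \<le> \<bar>pv2 (SS k)\<bar>"
    and "cnt k p" "p \<le> p'" "p + 1 \<le> p' \<or> gap2 (fly (SS k) d) = 0"
  shows "cnt (Suc k) p'"
proof -
  note G = step_gap[OF nd T v2]
  have d: "d \<ge> 0" using nd_nonneg[OF SS_ordp nd] .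
  have "(gap2 (fly (SS k) d) = 0 \<and> rho \<le> gap2 (SS (Suc k)))
      \<or> (gap2 (SS (Suc k)) = gap2 (fly (SS k) d) \<and> p + 1 \<le> p')"
    using G(2,3) assms(6) by blast
  then show ?thesis using cnt_step[OF assms(4,5) conjunct1[OF SS_Suc[OF nd]] d G(1)] by blast
qed


lemma s1c: "c \<le> s1" using v10 by simp

lemma step_P: assumes P: "stP k" and cn: "cnt k 0" shows "stA (Suc k) \<and> cnt (Suc k) 1"
proof -
  have k0: "k = 0" and x: "px1 (SS k) = 0" and v: "pv1 (SS k) = - s1" using P unfolding stP_def by auto
  have vneg: "pv1 (SS k) < 0" using v s1c c by simp
  obtain d where nd: "next_delay (SS k) = Some d" using nd_some_of vneg by blast
  have "d \<le> px1 (SS k) / (- pv1 (SS k))" using nd_le1[OF nd vneg] .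
  then have "d \<le> 0" using x by simp
  moreover have "d \<ge> 0" using nd_nonneg[OF SS_ordp nd] .
  ultimately have d0: "d = 0" by simp
  have E: "tt (Suc k) = tt k + d" "SS (Suc k) = step2 M m2 (step1 M m1 (fly (SS k) d))"
    using SS_Suc[OF nd] by auto
  have st1: "step1 M m1 (SS k) = (SS k)\<lparr>pv1 := - pv1 (SS k)\<rparr>"
    unfolding step1_def using x vneg by simp
  have A: "stA (Suc k)" unfolding stA_def using E d0 st1 v x k0 by simp
  have f: "tt k \<le> Tm" "\<bar>\<bar>pv1 (SS k)\<bar> - s1\<bar> \<le> C1 * eps" using st_facts P by auto
  have T: "tt (Suc k) \<le> Tm" using E d0 f by simp
  have c2: "c / 2 \<le> \<bar>pv2 (SS k)\<bar>" using reg(3)[OF f] .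
  have "cnt (Suc k) 1" by (rule step_cnt[OF nd T c2 cn]) auto
  then show ?thesis using A by simp
qed

lemma step_A: assumes A: "stA k" and cn: "cnt k 1"
  shows "(stA (Suc k) \<and> cnt (Suc k) 1) \<or> (stB (Suc k) \<and> cnt (Suc k) 2)"
proof -
  have v: "pv1 (SS k) = s1" and x: "px1 (SS k) = s1 * tt k" using A unfolding stA_def by auto
  have f: "tt k \<le> Tm" "\<bar>\<bar>pv1 (SS k)\<bar> - s1\<bar> \<le> C1 * eps" using st_facts A by auto
  have V: "\<bar>pV (SS k)\<bar> \<le> c / 16" using reg(2)[OF f] .
  have c2: "c / 2 \<le> \<bar>pv2 (SS k)\<bar>" using reg(3)[OF f] .
  have vV: "pv1 (SS k) > pV (SS k)" using v V s1c c by auto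
  obtain d where nd: "next_delay (SS k) = Some d" using nd_some_of vV by blast
  have d: "d \<ge> 0" using nd_nonneg[OF SS_ordp nd] .
  have E: "tt (Suc k) = tt k + d" "SS (Suc k) = step2 M m2 (step1 M m1 (fly (SS k) d))"
    using SS_Suc[OF nd] by auto
  have of: "ordp (fly (SS k) d)" using ordp_fly[OF SS_ordp nd] .
  have x': "px1 (fly (SS k) d) = s1 * tt (Suc k)" using x v E by (simp add: algebra_simps)
  have x'le: "px1 (fly (SS k) d) \<le> pX (fly (SS k) d)" "pX (fly (SS k) d) \<le> 1"
    using of unfolding ordp_def by linarith+
  have "c * tt (Suc k) \<le> s1 * tt (Suc k)" using s1c tt_nonneg by (intro mult_right_mono) auto
  then have "c * tt (Suc k) \<le> 1" using x' x'le by linarith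
  then have t1c: "tt (Suc k) \<le> 1 / c" using c by (simp add: le_divide_eq mult.commute)
  then have T: "tt (Suc k) \<le> Tm" using Tm_ge by linarith
  have xr: "Xrng (pX (SS (Suc k)))" using X_rng[OF T] .
  have Xpos: "pX (fly (SS k) d) > 0" using xr E Xrng_pos by simp
  show ?thesis
  proof (cases "px1 (fly (SS k) d) = pX (fly (SS k) d)")
    case True
    have st1: "step1 M m1 (fly (SS k) d) = collide_left M m1 (fly (SS k) d)"
      unfolding step1_def using True Xpos vV by simp
    define v' where "v' = ((m1 - M) * s1 + 2 * M * pV (SS k)) / (m1 + M)"
    have pv: "pv1 (SS (Suc k)) = v'" unfolding E st1 v'_def using v by simp
    have "\<bar>v' + s1\<bar> \<le> 2 * m1 * s1 / M + 2 * \<bar>pV (SS k)\<bar>"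
      unfolding v'_def by (rule cl_bound[OF Mpos m1]) simp
    also have "\<dots> \<le> C1 * eps"
    proof -
      have "2 * m1 * s1 / M = 2 * m1 * s1 * eps\<^sup>2" by simp
      also have "\<dots> \<le> 2 * m1 * vm * eps"
      proof -
        have "eps\<^sup>2 \<le> eps" using eps eps1 by (simp add: power2_eq_square mult_le_cancel_right1)
        then have "s1 * eps\<^sup>2 \<le> vm * eps" using s1_le(1) eps by (intro mult_mono) auto
        then show ?thesis using m1 by (simp add: mult.assoc)
      qed
      finally have "2 * m1 * s1 / M \<le> 2 * m1 * vm * eps" .
      moreover have "2 * \<bar>pV (SS k)\<bar> \<le> 2 * (eps * Wm)" using en_bounds(1)[OF SS_en] by simp
      ultimately show ?thesis unfolding C1_def by (simp add: algebra_simps)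
    qed
    finally have b: "\<bar>v' + s1\<bar> \<le> C1 * eps" .
    have "C1 * eps \<le> c / 2" using sm3 by (simp add: mult.commute)
    then have neg: "v' < 0" using b s1c c unfolding abs_le_iff by linarith
    have px: "px1 (SS (Suc k)) = pX (fly (SS k) d)" using E True by simp
    have "c / 2 * tt (Suc k) \<le> c / 2 * (1 / c)" using t1c c by (intro mult_left_mono) auto
    then have "c / 2 * tt (Suc k) \<le> 1 / 2" using c by simp
    then have B: "stB (Suc k)" unfolding stB_def using pv b neg px Xpos x'le by simp
    have "cnt (Suc k) 2" by (rule step_cnt[OF nd T c2 cn]) auto
    then show ?thesis using B by simp
  next
    case False
    have st1: "step1 M m1 (fly (SS k) d) = fly (SS k) d"
      unfolding step1_def using False v s1c c by auto
    have A': "stA (Suc k)" unfolding stA_def using E st1 v x' by simp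
    have "(pv1 (SS k) < 0 \<and> px1 (fly (SS k) d) = 0)
      \<or> (pv1 (SS k) > pV (SS k) \<and> px1 (fly (SS k) d) = pX (fly (SS k) d))
      \<or> (pv2 (SS k) < pV (SS k) \<and> px2 (fly (SS k) d) = pX (fly (SS k) d))
      \<or> (pv2 (SS k) > 0 \<and> px2 (fly (SS k) d) = 1)" by (rule nd_cases_fly[OF nd])
    then have "(pv2 (SS k) < pV (SS k) \<and> px2 (fly (SS k) d) = pX (fly (SS k) d))
      \<or> (pv2 (SS k) > 0 \<and> px2 (fly (SS k) d) = 1)" using False v s1c c by auto
    then have g0: "gap2 (fly (SS k) d) = 0" using step_gap(4)[OF nd T c2] by blast
    have "cnt (Suc k) 1" by (rule step_cnt[OF nd T c2 cn]) (use g0 in auto)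
    then show ?thesis using A' by simp
  qed
qed

lemma step_B: assumes B: "stB k" and cn: "cnt k 2" and nr: "\<not> ret k"
  shows "stB (Suc k) \<and> cnt (Suc k) 2"
proof -
  have v: "pv1 (SS k) < 0" "\<bar>pv1 (SS k) + s1\<bar> \<le> C1 * eps" and x: "0 < px1 (SS k)"
    and xt: "px1 (SS k) + c / 2 * tt k \<le> 3 / 2" using B unfolding stB_def by auto
  have f: "tt k \<le> Tm" "\<bar>\<bar>pv1 (SS k)\<bar> - s1\<bar> \<le> C1 * eps" using st_facts B by auto
  have V: "\<bar>pV (SS k)\<bar> \<le> c / 16" using reg(2)[OF f] .
  have c2: "c / 2 \<le> \<bar>pv2 (SS k)\<bar>" using reg(3)[OF f] .
  have "C1 * eps \<le> c / 2" using sm3 by (simp add: mult.commute)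
  then have vc: "pv1 (SS k) \<le> - c / 2" using v s1c unfolding abs_le_iff by linarith
  obtain d where nd: "next_delay (SS k) = Some d" using nd_some_of v by blast
  have d: "d \<ge> 0" using nd_nonneg[OF SS_ordp nd] .
  have E: "tt (Suc k) = tt k + d" "SS (Suc k) = step2 M m2 (step1 M m1 (fly (SS k) d))"
    using SS_Suc[OF nd] by auto
  have ne: "px1 (SS k) + pv1 (SS k) * d \<noteq> 0" using nr v x nd unfolding ret_def by auto
  have ge: "px1 (SS k) + pv1 (SS k) * d \<ge> 0" using fly_gap1[OF nd v(1)] .
  have x': "px1 (fly (SS k) d) > 0" using ne ge by simp
  have st1: "step1 M m1 (fly (SS k) d) = fly (SS k) d"
    unfolding step1_def using x' vc V c by auto
  have pv: "pv1 (SS (Suc k)) = pv1 (SS k)" "px1 (SS (Suc k)) = px1 (fly (SS k) d)"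
    using E st1 by simp_all
  have "pv1 (SS k) * d \<le> - c / 2 * d" using vc d by (rule mult_right_mono)
  then have xt': "px1 (SS (Suc k)) + c / 2 * tt (Suc k) \<le> 3 / 2"
    using pv(2) E xt by (simp add: algebra_simps)
  have B': "stB (Suc k)" unfolding stB_def using pv v x' xt' by simp
  have "c / 2 * tt (Suc k) \<le> 3 / 2" using xt' x' pv(2) by linarith
  then have T: "tt (Suc k) \<le> Tm" unfolding Tm_def using c by (simp add: le_divide_eq mult.commute)
  have "(pv1 (SS k) < 0 \<and> px1 (fly (SS k) d) = 0)
    \<or> (pv1 (SS k) > pV (SS k) \<and> px1 (fly (SS k) d) = pX (fly (SS k) d))
    \<or> (pv2 (SS k) < pV (SS k) \<and> px2 (fly (SS k) d) = pX (fly (SS k) d))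
    \<or> (pv2 (SS k) > 0 \<and> px2 (fly (SS k) d) = 1)" by (rule nd_cases_fly[OF nd])
  then have "(pv2 (SS k) < pV (SS k) \<and> px2 (fly (SS k) d) = pX (fly (SS k) d))
    \<or> (pv2 (SS k) > 0 \<and> px2 (fly (SS k) d) = 1)" using x' vc V c by auto
  then have g0: "gap2 (fly (SS k) d) = 0" using step_gap(4)[OF nd T c2] by blast
  have "cnt (Suc k) 2" by (rule step_cnt[OF nd T c2 cn]) (use g0 in auto)
  then show ?thesis using B' by simp
qed

lemma Inv_step: "Inv k \<Longrightarrow> \<not> ret k \<Longrightarrow> Inv (Suc k)"
  unfolding Inv_def using step_P step_A step_B by blast

lemma gap2_nn: "ordp s \<Longrightarrow> 0 \<le> gap2 s"
  unfolding gap2_def ordp_def by auto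

lemma cnt0: "p \<ge> 0 \<Longrightarrow> cnt 0 p"
proof -
  assume p: "p \<ge> 0"
  have "R * dl = rho" unfolding dl_def using R_pos by simp
  then have "rho \<le> gap2 (SS 0) + R * (tt 0 - (- dl))" using gap2_nn[OF s0ord] by simp
  then show ?thesis unfolding cnt_def using p dl_pos
    by (intro exI[of _ "0::nat"] exI[of _ "- dl"]) simp
qed

lemma Inv0: "Inv 0"
proof (cases "pv1 s0 < 0")
  case True
  then have "stP 0" unfolding stP_def using x10 by simp
  then show ?thesis unfolding Inv_def using cnt0 by simp
next
  case False
  then have "stA 0" unfolding stA_def using x10 by simp
  then show ?thesis unfolding Inv_def using cnt0 by simp
qed

lemma Inv_upto: "(\<forall>j<k. \<not> ret j) \<Longrightarrow> Inv k"
proof (induction k)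
  case 0 then show ?case using Inv0 by simp
next
  case (Suc k)
  then show ?case using Inv_step by simp
qed

lemma Inv_count: assumes "Inv k" shows "real k \<le> Tm / dl + 3"
proof -
  have T: "tt k \<le> Tm" using Inv_facts[OF assms] by simp
  have "cnt k 0 \<or> cnt k 1 \<or> cnt k 2" using assms unfolding Inv_def by blast
  then obtain p :: real where p: "p \<le> 2" "cnt k p"
  proof (elim disjE)
    assume "cnt k 0" then show thesis using that[of 0] by simp
  next
    assume "cnt k 1" then show thesis using that[of 1] by simp
  next
    assume "cnt k 2" then show thesis using that[of 2] by simp
  qed
  obtain N l where N: "real k \<le> real N + p" "dl * (real N - 1) \<le> l" "l \<le> tt k"
    using p(2) unfolding cnt_def by blast
  have "dl * (real N - 1) \<le> Tm" using N T by linarith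
  then have "real N - 1 \<le> Tm / dl" using dl_pos by (simp add: le_divide_eq mult.commute)
  then show ?thesis using N(1) p(1) by linarith
qed

lemma ret_exists: "\<exists>k. ret k"
proof (rule ccontr)
  assume "\<not> (\<exists>k. ret k)"
  then have "Inv k" for k using Inv_upto by blast
  then have "real (nat \<lceil>Tm / dl\<rceil> + 4) \<le> Tm / dl + 3" using Inv_count by blast
  moreover have "Tm / dl \<le> real (nat \<lceil>Tm / dl\<rceil>)" by linarith
  ultimately show False by simp
qed

end



lemma phi1_step1_int: assumes "pX s > 0" shows "phi1 (step1 M m s) - phi1 s \<in> \<int>"
proof -
  consider (a) "px1 s = 0 \<and> pv1 s < 0" | (b) "\<not> (px1 s = 0 \<and> pv1 s < 0)" "px1 s = pX s \<and> pv1 s > pV s"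
    | (c) "\<not> (px1 s = 0 \<and> pv1 s < 0)" "\<not> (px1 s = pX s \<and> pv1 s > pV s)" by blast
  then show ?thesis
  proof cases
    case a
    have st: "step1 M m s = s\<lparr>pv1 := - pv1 s\<rparr>" unfolding step1_def by (simp only: if_P[OF a])
    have "phi1 (step1 M m s) - phi1 s = -1" unfolding st phi1_def using a by simp
    then show ?thesis by simp
  next
    case b
    have st: "step1 M m s = collide_left M m s" unfolding step1_def
      by (simp only: if_not_P[OF b(1)] if_P[OF b(2)])
    have "phi1 (step1 M m s) - phi1 s = 0" unfolding st phi1_def using b assms by simp
    then show ?thesis by simp
  next
    case c
    have st: "step1 M m s = s" unfolding step1_def by (simp only: if_not_P[OF c(1)] if_not_P[OF c(2)])
    show ?thesis unfolding st by simp
  qed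
qed

lemma phi2_step2_int: assumes "pX s < 1" shows "phi2 (step2 M m s) - phi2 s \<in> \<int>"
proof -
  consider (a) "px2 s = pX s \<and> pv2 s < pV s" | (b) "\<not> (px2 s = pX s \<and> pv2 s < pV s)" "px2 s = 1 \<and> pv2 s > 0"
    | (c) "\<not> (px2 s = pX s \<and> pv2 s < pV s)" "\<not> (px2 s = 1 \<and> pv2 s > 0)" by blast
  then show ?thesis
  proof cases
    case a
    have st: "step2 M m s = collide_right M m s" unfolding step2_def by (simp only: if_P[OF a])
    have ne: "1 - pX s \<noteq> 0" using assms by simp
    have "phi2 (step2 M m s) - phi2 s = 0" unfolding st phi2_def using a ne by (simp add: field_simps)
    then show ?thesis by simp
  next
    case b
    have st: "step2 M m s = s\<lparr>pv2 := - pv2 s\<rparr>" unfolding step2_def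
      by (simp only: if_not_P[OF b(1)] if_P[OF b(2)])
    have "phi2 (step2 M m s) - phi2 s = -1" unfolding st phi2_def using b by simp
    then show ?thesis by simp
  next
    case c
    have st: "step2 M m s = s" unfolding step2_def by (simp only: if_not_P[OF c(1)] if_not_P[OF c(2)])
    show ?thesis unfolding st by simp
  qed
qed

lemma phi1_step2[simp]: "phi1 (step2 M m s) = phi1 s" unfolding phi1_def by simp
lemma phi2_step1[simp]: "phi2 (step1 M m s) = phi2 s" unfolding phi2_def by simp

lemma phi_resolve_int: assumes "pX s > 0" "pX s < 1"
  shows "phi1 (resolve M m1 m2 s) - phi1 s \<in> \<int>" "phi2 (resolve M m1 m2 s) - phi2 s \<in> \<int>"
  unfolding resolve_eq using phi1_step1_int[OF assms(1)] phi2_step2_int[of "step1 M m1 s"] assms(2)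
  by simp_all

lemma round_le: fixes x :: real and n :: int shows "\<bar>x - of_int (round x)\<bar> \<le> \<bar>x - of_int n\<bar>"
proof (cases "n = round x")
  case True then show ?thesis by simp
next
  case False
  have h: "\<bar>of_int (round x) - x\<bar> \<le> (1::real) / 2" by (rule of_int_round_abs_le)
  have "\<bar>n - round x\<bar> \<ge> 1" using False by simp
  then have "\<bar>real_of_int n - of_int (round x)\<bar> \<ge> 1" by (metis of_int_1_le_iff of_int_abs of_int_diff)
  then show ?thesis using h by linarith
qed

lemma circ_le: "n \<in> \<int> \<Longrightarrow> circ_dist a b \<le> \<bar>a - b - n\<bar>"
  unfolding circ_dist_def by (metis Ints_cases round_le)

lemma half1: fixes A B :: real shows "1 - A / 2 - (1 - B / 2) = - ((A - B) / 2)" by (simp add: field_simps)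
lemma half2: fixes A B :: real shows "A / 2 - B / 2 = (A - B) / 2" by (simp add: field_simps)
lemma half3: fixes A B :: real shows "(1 - A / 2) - (1 - B / 2) = - ((A - B) / 2)" by (simp add: field_simps)

lemma aux_neg: fixes t q x y :: real shows "- ((t * q / (x * y)) / 2) = t * (- q) / (2 * x * y)"
  by (simp add: divide_divide_eq_left ac_simps)

lemma aux_pos: fixes t q x y :: real shows "(t * q / (x * y)) / 2 = t * q / (2 * x * y)"
  by (simp add: divide_divide_eq_left ac_simps)

context traj
begin

definition ks :: nat where "ks = (LEAST k. ret k)"

lemma ks_ret: "ret ks" unfolding ks_def using ret_exists by (metis LeastI)

lemma ks_min: "j < ks \<Longrightarrow> \<not> ret j" unfolding ks_def by (rule not_less_Least)

lemma Inv_le_ks: "j \<le> ks \<Longrightarrow> Inv j" using Inv_upto ks_min by simp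

lemma nd_le_ks: "j \<le> ks \<Longrightarrow> next_delay (SS j) \<noteq> None" using Inv_nd[OF Inv_le_ks] by fastforce

definition w1 where "w1 = s1 / (2 * X0)"
definition w2 where "w2 = s2 / (2 * (1 - X0))"

lemma X0_props: "mu \<le> X0" "mu \<le> 1 - X0" "X0 > 0" "X0 < 1"
  using X0a X0b mu_le a rho_def b mu_pos by auto

lemma phi1_fly:
  assumes o: "ordp S" and xr: "Xrng (pX S)" and xd: "\<bar>pX S + pV S * tau - X0\<bar> \<le> eps * Wm * Tm"
    and tau: "tau \<ge> 0" and en: "en M m1 m2 S = E0" and v: "\<bar>\<bar>pv1 S\<bar> - s1\<bar> \<le> (C1 + C2) * eps"
  shows "\<bar>phi1 (fly S tau) - phi1 S - w1 * tau\<bar> \<le> Cp * eps * tau"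
proof -
  have xr': "Xrng (pX S + pV S * tau)" using Xrng_of xd by simp
  have X: "mu \<le> pX S" "mu \<le> pX S + pV S * tau" using xr xr' mu_le unfolding Xrng_def by auto
  have Xp: "pX S > 0" "pX S + pV S * tau > 0" using X mu_pos by linarith+
  have ox: "0 \<le> px1 S" "px1 S \<le> pX S" using o unfolding ordp_def by auto
  have V: "\<bar>pV S\<bar> \<le> eps * Wm" using en_bounds(1)[OF en] .
  have Xe: "\<bar>X0 - (pX S + pV S * tau)\<bar> \<le> Xe * eps" using xd unfolding Xe_def by (simp add: abs_minus_commute algebra_simps)
  define U where "U = (if pv1 S < 0 then - pV S else pV S)"
  have U: "\<bar>U\<bar> \<le> eps * Wm" using V unfolding U_def by simp
  have fd: "(px1 S + pv1 S * tau) / (pX S + pV S * tau) - px1 S / pX S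
      = tau * (pv1 S * pX S - px1 S * pV S) / (pX S * (pX S + pV S * tau))"
    by (rule frac_diff_eq) (use Xp in auto)
  have e: "phi1 (fly S tau) - phi1 S = tau * (\<bar>pv1 S\<bar> * pX S - px1 S * U) / (2 * pX S * (pX S + pV S * tau))"
  proof (cases "pv1 S < 0")
    case True
    have "phi1 (fly S tau) - phi1 S = - (((px1 S + pv1 S * tau) / (pX S + pV S * tau) - px1 S / pX S) / 2)"
    proof -
      have p1: "phi1 (fly S tau) = 1 - (px1 S + pv1 S * tau) / (2 * (pX S + pV S * tau))"
        unfolding phi1_def using True by simp
      have p0: "phi1 S = 1 - px1 S / (2 * pX S)" unfolding phi1_def using True by simp
      have q: "(px1 S + pv1 S * tau) / (2 * (pX S + pV S * tau)) = ((px1 S + pv1 S * tau) / (pX S + pV S * tau)) / 2"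
        by (simp add: mult.commute)
      have q0: "px1 S / (2 * pX S) = (px1 S / pX S) / 2" by (simp add: mult.commute)
      show ?thesis unfolding p1 p0 q q0 by (rule half1)
    qed
    also have "\<dots> = tau * (- (pv1 S * pX S - px1 S * pV S)) / (2 * pX S * (pX S + pV S * tau))"
      unfolding fd by (rule aux_neg)
    also have "- (pv1 S * pX S - px1 S * pV S) = \<bar>pv1 S\<bar> * pX S - px1 S * U"
      unfolding U_def using True by simp
    finally show ?thesis .
  next
    case False
    have "phi1 (fly S tau) - phi1 S = ((px1 S + pv1 S * tau) / (pX S + pV S * tau) - px1 S / pX S) / 2"
    proof -
      have p1: "phi1 (fly S tau) = (px1 S + pv1 S * tau) / (2 * (pX S + pV S * tau))"
        unfolding phi1_def using False by simp
      have p0: "phi1 S = px1 S / (2 * pX S)" unfolding phi1_def using False by simp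
      have q: "(px1 S + pv1 S * tau) / (2 * (pX S + pV S * tau)) = ((px1 S + pv1 S * tau) / (pX S + pV S * tau)) / 2"
        by (simp only: divide_divide_eq_left mult.commute)
      have q0: "px1 S / (2 * pX S) = (px1 S / pX S) / 2" by (simp only: divide_divide_eq_left mult.commute)
      show ?thesis unfolding p1 p0 q q0 by (rule half2)
    qed
    also have "\<dots> = tau * (pv1 S * pX S - px1 S * pV S) / (2 * pX S * (pX S + pV S * tau))"
      unfolding fd by (rule aux_pos)
    also have "pv1 S * pX S - px1 S * pV S = \<bar>pv1 S\<bar> * pX S - px1 S * U"
      unfolding U_def using False by simp
    finally show ?thesis .
  qed
  have "\<bar>tau * (\<bar>pv1 S\<bar> * pX S - px1 S * U) / (2 * pX S * (pX S + pV S * tau)) - s1 / (2 * X0) * tau\<bar>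
     \<le> ((C1 + C2) / (2 * mu) + vm * Xe / (2 * mu\<^sup>2) + Wm / (2 * mu)) * eps * tau"
    by (rule phase_arith[OF mu_pos X X0_props(1) ox tau v Xe U]) (use s1_le in auto)
  then show ?thesis unfolding e w1_def Cp_def by simp
qed

lemma phi2_fly:
  assumes o: "ordp S" and xr: "Xrng (pX S)" and xd: "\<bar>pX S + pV S * tau - X0\<bar> \<le> eps * Wm * Tm"
    and tau: "tau \<ge> 0" and en: "en M m1 m2 S = E0" and v: "\<bar>\<bar>pv2 S\<bar> - s2\<bar> \<le> (C1 + C2) * eps"
  shows "\<bar>phi2 (fly S tau) - phi2 S - w2 * tau\<bar> \<le> Cp * eps * tau"
proof -
  have xr': "Xrng (pX S + pV S * tau)" using Xrng_of xd by simp
  have X: "mu \<le> 1 - pX S" "mu \<le> 1 - (pX S + pV S * tau)" using xr xr' mu_le unfolding Xrng_def by auto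
  have Xp: "1 - pX S > 0" "1 - (pX S + pV S * tau) > 0" using X mu_pos by linarith+
  have ox: "0 \<le> 1 - px2 S" "1 - px2 S \<le> 1 - pX S" using o unfolding ordp_def by auto
  have V: "\<bar>pV S\<bar> \<le> eps * Wm" using en_bounds(1)[OF en] .
  have Xe: "\<bar>(1 - X0) - (1 - (pX S + pV S * tau))\<bar> \<le> Xe * eps" using xd unfolding Xe_def
    by (simp add: algebra_simps)
  define U where "U = (if pv2 S < 0 then - pV S else pV S)"
  have U: "\<bar>U\<bar> \<le> eps * Wm" using V unfolding U_def by simp
  have fd: "((1 - px2 S) + (- pv2 S) * tau) / ((1 - pX S) + (- pV S) * tau) - (1 - px2 S) / (1 - pX S)
      = tau * ((- pv2 S) * (1 - pX S) - (1 - px2 S) * (- pV S)) / ((1 - pX S) * ((1 - pX S) + (- pV S) * tau))"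
    by (rule frac_diff_eq) (use Xp in auto)
  have e: "phi2 (fly S tau) - phi2 S = tau * (\<bar>pv2 S\<bar> * (1 - pX S) - (1 - px2 S) * U)
       / (2 * (1 - pX S) * (1 - (pX S + pV S * tau)))"
  proof (cases "pv2 S < 0")
    case True
    have "phi2 (fly S tau) - phi2 S = (((1 - px2 S) + (- pv2 S) * tau) / ((1 - pX S) + (- pV S) * tau)
        - (1 - px2 S) / (1 - pX S)) / 2"
    proof -
      have p1: "phi2 (fly S tau) = ((1 - px2 S) + (- pv2 S) * tau) / (2 * ((1 - pX S) + (- pV S) * tau))"
        unfolding phi2_def using True by (simp add: algebra_simps)
      have p0: "phi2 S = (1 - px2 S) / (2 * (1 - pX S))" unfolding phi2_def using True by simp
      have q: "((1 - px2 S) + (- pv2 S) * tau) / (2 * ((1 - pX S) + (- pV S) * tau))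
          = (((1 - px2 S) + (- pv2 S) * tau) / ((1 - pX S) + (- pV S) * tau)) / 2"
        by (simp only: divide_divide_eq_left mult.commute)
      have q0: "(1 - px2 S) / (2 * (1 - pX S)) = ((1 - px2 S) / (1 - pX S)) / 2"
        by (simp only: divide_divide_eq_left mult.commute)
      show ?thesis unfolding p1 p0 q q0 by (rule half2)
    qed
    also have "\<dots> = tau * ((- pv2 S) * (1 - pX S) - (1 - px2 S) * (- pV S)) / (2 * (1 - pX S) * ((1 - pX S) + (- pV S) * tau))"
      unfolding fd by (rule aux_pos)
    also have "(- pv2 S) * (1 - pX S) - (1 - px2 S) * (- pV S) = \<bar>pv2 S\<bar> * (1 - pX S) - (1 - px2 S) * U"
      unfolding U_def using True by simp
    also have "(1 - pX S) + (- pV S) * tau = 1 - (pX S + pV S * tau)" by simp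
    finally show ?thesis .
  next
    case False
    have "phi2 (fly S tau) - phi2 S = - ((((1 - px2 S) + (- pv2 S) * tau) / ((1 - pX S) + (- pV S) * tau)
        - (1 - px2 S) / (1 - pX S)) / 2)"
    proof -
      have p1: "phi2 (fly S tau) = 1 - ((1 - px2 S) + (- pv2 S) * tau) / (2 * ((1 - pX S) + (- pV S) * tau))"
        unfolding phi2_def using False by (simp add: algebra_simps)
      have p0: "phi2 S = 1 - (1 - px2 S) / (2 * (1 - pX S))" unfolding phi2_def using False by simp
      have q: "((1 - px2 S) + (- pv2 S) * tau) / (2 * ((1 - pX S) + (- pV S) * tau))
          = (((1 - px2 S) + (- pv2 S) * tau) / ((1 - pX S) + (- pV S) * tau)) / 2"
        by (simp only: divide_divide_eq_left mult.commute)
      have q0: "(1 - px2 S) / (2 * (1 - pX S)) = ((1 - px2 S) / (1 - pX S)) / 2"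
        by (simp only: divide_divide_eq_left mult.commute)
      show ?thesis unfolding p1 p0 q q0 by (rule half3)
    qed
    also have "\<dots> = tau * (- ((- pv2 S) * (1 - pX S) - (1 - px2 S) * (- pV S))) / (2 * (1 - pX S) * ((1 - pX S) + (- pV S) * tau))"
      unfolding fd by (rule aux_neg)
    also have "- ((- pv2 S) * (1 - pX S) - (1 - px2 S) * (- pV S)) = \<bar>pv2 S\<bar> * (1 - pX S) - (1 - px2 S) * U"
      unfolding U_def using False by simp
    also have "(1 - pX S) + (- pV S) * tau = 1 - (pX S + pV S * tau)" by simp
    finally show ?thesis .
  qed
  have "\<bar>tau * (\<bar>pv2 S\<bar> * (1 - pX S) - (1 - px2 S) * U) / (2 * (1 - pX S) * (1 - (pX S + pV S * tau)))
      - s2 / (2 * (1 - X0)) * tau\<bar>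
     \<le> ((C1 + C2) / (2 * mu) + vm * Xe / (2 * mu\<^sup>2) + Wm / (2 * mu)) * eps * tau"
    by (rule phase_arith[OF mu_pos X X0_props(2) ox tau v Xe U]) (use s1_le in auto)
  then show ?thesis unfolding e w2_def Cp_def by simp
qed

end



lemma zdist_le:
  assumes "\<bar>X - X'\<bar> \<le> B" "\<bar>W - W'\<bar> \<le> B" "\<bar>s1 - s1'\<bar> \<le> B" "\<bar>s2 - s2'\<bar> \<le> B"
    "circ_dist p1 p1' \<le> B" "circ_dist p2 p2' \<le> B"
  shows "zdist (X, W, s1, s2, p1, p2) (X', W', s1', s2', p1', p2') \<le> B"
  unfolding zdist_def prod.case
proof (rule Max.boundedI)
  show "finite {\<bar>X - X'\<bar>, \<bar>W - W'\<bar>, \<bar>s1 - s1'\<bar>, \<bar>s2 - s2'\<bar>, circ_dist p1 p1', circ_dist p2 p2'}" by simp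
  show "{\<bar>X - X'\<bar>, \<bar>W - W'\<bar>, \<bar>s1 - s1'\<bar>, \<bar>s2 - s2'\<bar>, circ_dist p1 p1', circ_dist p2 p2'} \<noteq> {}" by simp
  fix x assume "x \<in> {\<bar>X - X'\<bar>, \<bar>W - W'\<bar>, \<bar>s1 - s1'\<bar>, \<bar>s2 - s2'\<bar>, circ_dist p1 p1', circ_dist p2 p2'}"
  then show "x \<le> B" using assms by blast
qed

lemma circ_self: "circ_dist p p = 0"
  unfolding circ_dist_def by simp

context traj
begin

lemma consts_nn: "C1 \<ge> 0" "CW \<ge> 0" "C2 \<ge> 0" "Cp \<ge> 0" "Xe \<ge> 0"
proof -
  show c1: "C1 \<ge> 0" by (rule C1_nn)
  have "LF \<ge> 0" unfolding LF_def using m1 m2 a rho_pos vm_pos R_pos by simp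
  then show cw: "CW \<ge> 0" unfolding CW_def using Tm_pos m1 m2 vm_pos by simp
  show c2: "C2 \<ge> 0" unfolding C2_def using cw c1 Wm_pos vm_pos m1 m2 c by simp
  show "Xe \<ge> 0" unfolding Xe_def using Wm_pos Tm_pos by simp
  then show "Cp \<ge> 0" unfolding Cp_def using c1 c2 mu_pos vm_pos Wm_pos by simp
qed

lemma verr: assumes "Inv k"
  shows "\<bar>\<bar>pv1 (SS k)\<bar> - s1\<bar> \<le> (C1 + C2) * eps" "\<bar>\<bar>pv2 (SS k)\<bar> - s2\<bar> \<le> (C1 + C2) * eps"
proof -
  have f: "tt k \<le> Tm" "\<bar>\<bar>pv1 (SS k)\<bar> - s1\<bar> \<le> C1 * eps" using Inv_facts[OF assms] by auto
  have "C1 * eps \<le> (C1 + C2) * eps" "C2 * eps \<le> (C1 + C2) * eps"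
    using consts_nn eps by (simp_all add: mult_right_mono)
  then show "\<bar>\<bar>pv1 (SS k)\<bar> - s1\<bar> \<le> (C1 + C2) * eps" "\<bar>\<bar>pv2 (SS k)\<bar> - s2\<bar> \<le> (C1 + C2) * eps"
    using f v2_err[OF f] by linarith+
qed

lemma xd_bound: assumes "tt k \<le> t" "t \<le> Tm"
  shows "\<bar>pX (SS k) + pV (SS k) * (t - tt k) - X0\<bar> \<le> eps * Wm * t"
proof -
  have a1: "\<bar>pX (SS k) - X0\<bar> \<le> eps * Wm * tt k" by (rule X_drift)
  have "\<bar>pV (SS k) * (t - tt k)\<bar> \<le> eps * Wm * (t - tt k)"
    unfolding abs_mult using en_bounds(1)[OF SS_en] assms eps Wm_pos by (intro mult_mono) auto
  then show ?thesis using a1 abs_triangle_ineq[of "pX (SS k) - X0" "pV (SS k) * (t - tt k)"]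
    by (simp add: algebra_simps)
qed

lemma xd_bound': assumes "tt k \<le> t" "t \<le> Tm"
  shows "\<bar>pX (SS k) + pV (SS k) * (t - tt k) - X0\<bar> \<le> eps * Wm * Tm"
proof -
  have "eps * Wm * t \<le> eps * Wm * Tm" using assms eps Wm_pos by (intro mult_left_mono) auto
  then show ?thesis using xd_bound[OF assms] by linarith
qed

lemma phase_inv: "(\<forall>j<k. \<not> ret j) \<Longrightarrow>
   (\<exists>n1::int. \<bar>phi1 (SS k) + n1 - phi1 s0 - w1 * tt k\<bar> \<le> Cp * eps * tt k) \<and>
   (\<exists>n2::int. \<bar>phi2 (SS k) + n2 - phi2 s0 - w2 * tt k\<bar> \<le> Cp * eps * tt k)"
proof (induction k)
  case 0
  show ?case by (intro conjI exI[of _ 0]) simp_all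
next
  case (Suc k)
  have I: "Inv k" "Inv (Suc k)" using Inv_upto Suc.prems by auto
  obtain n1 n2 :: int where n1: "\<bar>phi1 (SS k) + n1 - phi1 s0 - w1 * tt k\<bar> \<le> Cp * eps * tt k"
    and n2: "\<bar>phi2 (SS k) + n2 - phi2 s0 - w2 * tt k\<bar> \<le> Cp * eps * tt k" using Suc by auto
  obtain d where nd: "next_delay (SS k) = Some d" using Inv_nd[OF I(1)] by blast
  have d: "d \<ge> 0" using nd_nonneg[OF SS_ordp nd] .
  note E = events_Some[OF nd]
  have T: "tt k \<le> Tm" "tt (Suc k) \<le> Tm" using Inv_facts I by auto
  have xd: "\<bar>pX (SS k) + pV (SS k) * d - X0\<bar> \<le> eps * Wm * Tm"
    using xd_bound'[of k "tt (Suc k)"] E T d by simp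
  have xr: "Xrng (pX (SS k))" using X_rng[OF T(1)] .
  have xr': "Xrng (pX (fly (SS k) d))" using Xrng_of xd by simp
  have f1: "\<bar>phi1 (fly (SS k) d) - phi1 (SS k) - w1 * d\<bar> \<le> Cp * eps * d"
    by (rule phi1_fly[OF SS_ordp xr xd d SS_en verr(1)[OF I(1)]])
  have f2: "\<bar>phi2 (fly (SS k) d) - phi2 (SS k) - w2 * d\<bar> \<le> Cp * eps * d"
    by (rule phi2_fly[OF SS_ordp xr xd d SS_en verr(2)[OF I(1)]])
  have xp: "pX (fly (SS k) d) > 0" "pX (fly (SS k) d) < 1" using Xrng_pos[OF xr'] by auto
  obtain J1 :: int where J1: "phi1 (SS (Suc k)) - phi1 (fly (SS k) d) = of_int J1"
    using phi_resolve_int(1)[OF xp, of M m1 m2] E by (metis Ints_cases)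
  obtain J2 :: int where J2: "phi2 (SS (Suc k)) - phi2 (fly (SS k) d) = of_int J2"
    using phi_resolve_int(2)[OF xp, of M m1 m2] E by (metis Ints_cases)
  have "\<bar>phi1 (SS (Suc k)) + of_int (n1 - J1) - phi1 s0 - w1 * tt (Suc k)\<bar> \<le> Cp * eps * tt (Suc k)"
  proof -
    have "phi1 (SS (Suc k)) + of_int (n1 - J1) - phi1 s0 - w1 * tt (Suc k)
       = (phi1 (fly (SS k) d) - phi1 (SS k) - w1 * d) + (phi1 (SS k) + n1 - phi1 s0 - w1 * tt k)"
      using J1 E by (simp add: algebra_simps)
    then show ?thesis using f1 n1 E abs_triangle_ineq[of "phi1 (fly (SS k) d) - phi1 (SS k) - w1 * d"
        "phi1 (SS k) + n1 - phi1 s0 - w1 * tt k"] by (simp add: algebra_simps)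
  qed
  moreover have "\<bar>phi2 (SS (Suc k)) + of_int (n2 - J2) - phi2 s0 - w2 * tt (Suc k)\<bar> \<le> Cp * eps * tt (Suc k)"
  proof -
    have "phi2 (SS (Suc k)) + of_int (n2 - J2) - phi2 s0 - w2 * tt (Suc k)
       = (phi2 (fly (SS k) d) - phi2 (SS k) - w2 * d) + (phi2 (SS k) + n2 - phi2 s0 - w2 * tt k)"
      using J2 E by (simp add: algebra_simps)
    then show ?thesis using f2 n2 E abs_triangle_ineq[of "phi2 (fly (SS k) d) - phi2 (SS k) - w2 * d"
        "phi2 (SS k) + n2 - phi2 s0 - w2 * tt k"] by (simp add: algebra_simps)
  qed
  ultimately show ?case by blast
qed

end



context traj
begin

lemma ks_B: "stB ks"
proof -
  have I: "Inv ks" using Inv_le_ks by simp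
  have r: "pv1 (SS ks) < 0" "0 < px1 (SS ks)" using ks_ret unfolding ret_def by auto
  have "\<not> stP ks" using r unfolding stP_def by auto
  moreover have "\<not> stA ks" using r v10 c unfolding stA_def by auto
  ultimately show ?thesis using Inv_st[OF I] by blast
qed

definition tau :: real where "tau = tt (Suc ks)"

definition Cf :: real where "Cf = Xe + CW + (C1 + C2) + Cp * Tm"

lemma tau_facts: "0 < tau" "tau \<le> Tm" "tt ks < tau"
  "motion M m1 m2 s0 tau = fly (SS ks) (tau - tt ks)" "phi1 (motion M m1 m2 s0 tau) \<in> \<int>"
proof -
  obtain dk where nd: "next_delay (SS ks) = Some dk" and z: "px1 (SS ks) + pv1 (SS ks) * dk = 0"
    using ks_ret unfolding ret_def by blast
  have E: "tau = tt ks + dk" unfolding tau_def using events_Some[OF nd] by simp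
  have B: "pv1 (SS ks) < 0" "\<bar>pv1 (SS ks) + s1\<bar> \<le> C1 * eps" "0 < px1 (SS ks)"
    "px1 (SS ks) + c / 2 * tt ks \<le> 3 / 2" using ks_B unfolding stB_def by auto
  have "C1 * eps \<le> c / 2" using sm3 by (simp add: mult.commute)
  then have vc: "pv1 (SS ks) \<le> - c / 2" using B(2) s1c unfolding abs_le_iff by linarith
  have d0: "dk \<ge> 0" using nd_nonneg[OF SS_ordp nd] .
  have dne: "dk \<noteq> 0" using z B(3) by auto
  then have dpos: "dk > 0" using d0 by simp
  have "c / 2 * dk \<le> (- pv1 (SS ks)) * dk" using vc d0 by (intro mult_right_mono) auto
  then have "c / 2 * dk \<le> px1 (SS ks)" using z by (simp add: algebra_simps)
  then have "c / 2 * tau \<le> 3 / 2" using B(4) E by (simp add: algebra_simps)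
  then show "tau \<le> Tm" unfolding Tm_def using c by (simp add: le_divide_eq mult.commute)
  show "tt ks < tau" using E dpos by simp
  then show tp: "0 < tau" using tt_nonneg[of ks] by linarith
  have nd_all: "\<forall>j\<le>ks. next_delay (SS j) \<noteq> None" using nd_le_ks by blast
  show mot: "motion M m1 m2 s0 tau = fly (SS ks) (tau - tt ks)"
    by (rule motion_eq[OF s0ord tp nd_all \<open>tt ks < tau\<close>]) (simp add: tau_def)
  have "phi1 (fly (SS ks) dk) = 1" unfolding phi1_def using B(1) z by simp
  then show "phi1 (motion M m1 m2 s0 tau) \<in> \<int>" using mot E by simp
qed

lemma tau_ret: "tau \<in> return_set eps m1 m2 s0"
  unfolding return_set_def emotion_def using tau_facts by simp

lemma Cf_nn: "Cf \<ge> 0" unfolding Cf_def using consts_nn Tm_pos by simp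

lemma bound_pos: assumes t0: "0 < t" and tt: "t \<le> tau"
  shows "zdist (zfree (zcoord eps s0) t) (zcoord eps (motion M m1 m2 s0 t)) \<le> Cf * eps"
proof -
  have Pks: "t \<le> tt (Suc ks)" using tt unfolding tau_def .
  define k where "k = (LEAST j. t \<le> tt (Suc j))"
  have Pk: "t \<le> tt (Suc k)" unfolding k_def using Pks by (rule LeastI)
  have kle: "k \<le> ks" unfolding k_def using Pks by (rule Least_le)
  have ltk: "tt k < t"
  proof (cases k)
    case 0 then show ?thesis using t0 by simp
  next
    case (Suc k')
    then have "k' < k" by simp
    then have "\<not> t \<le> tt (Suc k')" unfolding k_def by (rule not_less_Least)
    then show ?thesis using Suc by simp
  qed
  have nd_all: "\<forall>j\<le>k. next_delay (SS j) \<noteq> None" using nd_le_ks kle by simp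
  have mot: "motion M m1 m2 s0 t = fly (SS k) (t - tt k)"
    by (rule motion_eq[OF s0ord t0 nd_all ltk Pk])
  have I: "Inv k" using Inv_le_ks kle by simp
  have T: "t \<le> Tm" using tt tau_facts(2) by linarith
  have Tk: "tt k \<le> Tm" using Inv_facts[OF I] by simp
  have tau0: "t - tt k \<ge> 0" using ltk by simp
  have xd: "\<bar>pX (SS k) + pV (SS k) * (t - tt k) - X0\<bar> \<le> eps * Wm * t" using xd_bound ltk T by simp
  have xd': "\<bar>pX (SS k) + pV (SS k) * (t - tt k) - X0\<bar> \<le> eps * Wm * Tm" using xd_bound' ltk T by simp
  have xr: "Xrng (pX (SS k))" using X_rng[OF Tk] .
  have nr: "\<forall>j<k. \<not> ret j" using ks_min kle by simp
  obtain n1 n2 :: int where n1: "\<bar>phi1 (SS k) + n1 - phi1 s0 - w1 * tt k\<bar> \<le> Cp * eps * tt k"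
    and n2: "\<bar>phi2 (SS k) + n2 - phi2 s0 - w2 * tt k\<bar> \<le> Cp * eps * tt k" using phase_inv[OF nr] by auto
  define F where "F = fly (SS k) (t - tt k)"
  have f1: "\<bar>phi1 F - phi1 (SS k) - w1 * (t - tt k)\<bar> \<le> Cp * eps * (t - tt k)"
    unfolding F_def by (rule phi1_fly[OF SS_ordp xr xd' tau0 SS_en verr(1)[OF I]])
  have f2: "\<bar>phi2 F - phi2 (SS k) - w2 * (t - tt k)\<bar> \<le> Cp * eps * (t - tt k)"
    unfolding F_def by (rule phi2_fly[OF SS_ordp xr xd' tau0 SS_en verr(2)[OF I]])
  have CpT: "Cp * eps * t \<le> Cp * Tm * eps"
  proof -
    have "Cp * eps * t \<le> Cp * eps * Tm" using T consts_nn eps by (intro mult_left_mono) auto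
    then show ?thesis by (simp add: ac_simps)
  qed
  have XeT: "eps * Wm * t \<le> Xe * eps"
  proof -
    have "eps * Wm * t \<le> eps * Wm * Tm" using T eps Wm_pos by (intro mult_left_mono) auto
    then show ?thesis unfolding Xe_def by (simp add: ac_simps)
  qed
  have ph1: "\<bar>phi1 s0 + s1 / (2 * X0) * t - phi1 F - of_int n1\<bar> \<le> Cp * Tm * eps"
  proof -
    have "phi1 s0 + s1 / (2 * X0) * t - phi1 F - of_int n1
      = - ((phi1 F - phi1 (SS k) - w1 * (t - tt k)) + (phi1 (SS k) + n1 - phi1 s0 - w1 * tt k))"
      unfolding w1_def by (simp add: algebra_simps)
    then have "\<bar>phi1 s0 + s1 / (2 * X0) * t - phi1 F - of_int n1\<bar> \<le> Cp * eps * (t - tt k) + Cp * eps * tt k"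
      using f1 n1 abs_triangle_ineq[of "phi1 F - phi1 (SS k) - w1 * (t - tt k)"
        "phi1 (SS k) + n1 - phi1 s0 - w1 * tt k"] by (simp only: abs_minus_cancel; linarith)
    also have "\<dots> = Cp * eps * t" by (simp add: algebra_simps)
    finally show ?thesis using CpT by linarith
  qed
  have ph2: "\<bar>phi2 s0 + s2 / (2 * (1 - X0)) * t - phi2 F - of_int n2\<bar> \<le> Cp * Tm * eps"
  proof -
    have "phi2 s0 + s2 / (2 * (1 - X0)) * t - phi2 F - of_int n2
      = - ((phi2 F - phi2 (SS k) - w2 * (t - tt k)) + (phi2 (SS k) + n2 - phi2 s0 - w2 * tt k))"
      unfolding w2_def by (simp add: algebra_simps)
    then have "\<bar>phi2 s0 + s2 / (2 * (1 - X0)) * t - phi2 F - of_int n2\<bar> \<le> Cp * eps * (t - tt k) + Cp * eps * tt k"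
      using f2 n2 abs_triangle_ineq[of "phi2 F - phi2 (SS k) - w2 * (t - tt k)"
        "phi2 (SS k) + n2 - phi2 s0 - w2 * tt k"] by (simp only: abs_minus_cancel; linarith)
    also have "\<dots> = Cp * eps * t" by (simp add: algebra_simps)
    finally show ?thesis using CpT by linarith
  qed
  have c1: "circ_dist (phi1 s0 + s1 / (2 * X0) * t) (phi1 F) \<le> Cf * eps"
  proof -
    have "circ_dist (phi1 s0 + s1 / (2 * X0) * t) (phi1 F) \<le> \<bar>phi1 s0 + s1 / (2 * X0) * t - phi1 F - of_int n1\<bar>"
      by (rule circ_le) simp
    moreover have "Cp * Tm * eps \<le> Cf * eps" unfolding Cf_def using consts_nn eps by (intro mult_right_mono) auto
    ultimately show ?thesis using ph1 by linarith
  qed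
  have c2: "circ_dist (phi2 s0 + s2 / (2 * (1 - X0)) * t) (phi2 F) \<le> Cf * eps"
  proof -
    have "circ_dist (phi2 s0 + s2 / (2 * (1 - X0)) * t) (phi2 F) \<le> \<bar>phi2 s0 + s2 / (2 * (1 - X0)) * t - phi2 F - of_int n2\<bar>"
      by (rule circ_le) simp
    moreover have "Cp * Tm * eps \<le> Cf * eps" unfolding Cf_def using consts_nn eps by (intro mult_right_mono) auto
    ultimately show ?thesis using ph2 by linarith
  qed
  have bX: "\<bar>X0 - pX F\<bar> \<le> Cf * eps"
  proof -
    have "\<bar>X0 - pX F\<bar> \<le> Xe * eps" using xd XeT unfolding F_def by (simp add: abs_minus_commute)
    moreover have "Xe * eps \<le> Cf * eps" unfolding Cf_def using consts_nn eps Tm_pos by (intro mult_right_mono) auto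
    ultimately show ?thesis by linarith
  qed
  have bW: "\<bar>pV s0 / eps - pV F / eps\<bar> \<le> Cf * eps"
  proof -
    have "\<bar>pV s0 / eps - pV F / eps\<bar> \<le> CW * eps" using W_err[OF Tk] unfolding F_def by (simp add: abs_minus_commute)
    moreover have "CW * eps \<le> Cf * eps" unfolding Cf_def using consts_nn eps Tm_pos by (intro mult_right_mono) auto
    ultimately show ?thesis by linarith
  qed
  have bv: "\<bar>s1 - \<bar>pv1 F\<bar>\<bar> \<le> Cf * eps" "\<bar>s2 - \<bar>pv2 F\<bar>\<bar> \<le> Cf * eps"
  proof -
    have "(C1 + C2) * eps \<le> Cf * eps" unfolding Cf_def using consts_nn eps Tm_pos by (intro mult_right_mono) auto
    then show "\<bar>s1 - \<bar>pv1 F\<bar>\<bar> \<le> Cf * eps" "\<bar>s2 - \<bar>pv2 F\<bar>\<bar> \<le> Cf * eps"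
      using verr[OF I] unfolding F_def by (simp_all add: abs_minus_commute)
  qed
  have zf: "zfree (zcoord eps s0) t = (X0, pV s0 / eps, s1, s2, phi1 s0 + s1 / (2 * X0) * t,
      phi2 s0 + s2 / (2 * (1 - X0)) * t)" unfolding zfree_def zcoord_def by simp
  have zc: "zcoord eps (motion M m1 m2 s0 t) = (pX F, pV F / eps, \<bar>pv1 F\<bar>, \<bar>pv2 F\<bar>, phi1 F, phi2 F)"
    unfolding zcoord_def mot F_def by simp
  show ?thesis unfolding zf zc by (rule zdist_le[OF bX bW bv c1 c2])
qed

lemma bound_all: assumes "t \<in> {0..tau}"
  shows "zdist (zfree (zcoord eps s0) t) (zcoord eps (motion M m1 m2 s0 t)) \<le> Cf * eps"
proof (cases "t = 0")
  case True
  have m0: "motion M m1 m2 s0 0 = s0" unfolding motion_def by simp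
  have zf: "zfree (zcoord eps s0) 0 = zcoord eps s0" unfolding zfree_def zcoord_def by simp
  have "0 \<le> Cf * eps" using Cf_nn eps by simp
  then show ?thesis unfolding True m0 zf unfolding zcoord_def by (intro zdist_le) (simp_all add: circ_self)
next
  case False
  then show ?thesis using bound_pos assms by simp
qed

lemma final: "\<forall>t \<in> {0 .. Inf (return_set eps m1 m2 s0)}.
    zdist (zfree (zcoord eps s0) t) (zcoord eps (emotion eps m1 m2 s0 t)) \<le> Cf * eps"
proof
  fix t assume t: "t \<in> {0 .. Inf (return_set eps m1 m2 s0)}"
  have bdd: "bdd_below (return_set eps m1 m2 s0)"
    unfolding return_set_def by (rule bdd_belowI[of _ 0]) simp
  have "Inf (return_set eps m1 m2 s0) \<le> tau" by (rule cInf_lower[OF tau_ret bdd])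
  then have "t \<in> {0..tau}" using t by simp
  then show "zdist (zfree (zcoord eps s0) t) (zcoord eps (emotion eps m1 m2 s0 t)) \<le> Cf * eps"
    unfolding emotion_def by (rule bound_all)
qed

end


lemma phi1_int_x1:
  assumes "ordp s" "pX s > 0" "phi1 s \<in> \<int>" shows "px1 s = 0"
proof -
  have o: "0 \<le> px1 s" "px1 s \<le> pX s" using assms(1) unfolding ordp_def by auto
  have q: "0 \<le> px1 s / (2 * pX s)" "px1 s / (2 * pX s) \<le> 1 / 2"
    using o assms(2) by (auto simp: divide_le_eq)
  obtain n :: int where n: "phi1 s = of_int n" using assms(3) by (metis Ints_cases)
  show ?thesis
  proof (cases "pv1 s < 0")
    case True
    then have e: "phi1 s = 1 - px1 s / (2 * pX s)" unfolding phi1_def by simp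
    then have "1 / 2 \<le> real_of_int n" "real_of_int n \<le> 1" using q n by linarith+
    then have "n = 1" by linarith
    then have "px1 s / (2 * pX s) = 0" using e n by simp
    then show ?thesis using assms(2) by simp
  next
    case False
    then have e: "phi1 s = px1 s / (2 * pX s)" unfolding phi1_def by simp
    then have "0 \<le> real_of_int n" "real_of_int n \<le> 1 / 2" using q n by linarith+
    then have "n = 0" by linarith
    then have "px1 s / (2 * pX s) = 0" using e n by simp
    then show ?thesis using assms(2) by simp
  qed
qed

lemma compact_interval_bounds:
  fixes S :: "real set"
  assumes "compact S" "S \<subseteq> {lo<..<hi}" "lo < hi"
  shows "\<exists>a b. lo < a \<and> a \<le> b \<and> b < hi \<and> S \<subseteq> {a..b}"
proof (cases "S = {}")
  case True
  then show ?thesis using assms(3) by (intro exI[of _ "(lo + hi) / 2"]) auto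
next
  case False
  obtain a where a: "a \<in> S" "\<forall>t\<in>S. a \<le> t" using compact_attains_inf[OF assms(1) False] by blast
  obtain b where b: "b \<in> S" "\<forall>t\<in>S. t \<le> b" using compact_attains_sup[OF assms(1) False] by blast
  show ?thesis using a b assms(2) by (intro exI[of _ a] exI[of _ b]) auto
qed

lemma compact_pos_bounds:
  fixes S :: "real set"
  assumes "compact S" "S \<subseteq> {0<..}"
  shows "\<exists>c D. 0 < c \<and> c \<le> D \<and> S \<subseteq> {c..D}"
proof (cases "S = {}")
  case True
  then show ?thesis by (intro exI[of _ 1]) auto
next
  case False
  obtain a where a: "a \<in> S" "\<forall>t\<in>S. a \<le> t" using compact_attains_inf[OF assms(1) False] by blast
  obtain b where b: "b \<in> S" "\<forall>t\<in>S. t \<le> b" using compact_attains_sup[OF assms(1) False] by blast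
  show ?thesis using a b assms(2) by (intro exI[of _ a] exI[of _ b]) auto
qed

lemma compact_abs_bound:
  fixes S :: "real set"
  assumes "compact S"
  shows "\<exists>Bm. 0 \<le> Bm \<and> (\<forall>w\<in>S. \<bar>w\<bar> \<le> Bm)"
proof -
  obtain r where r: "\<forall>x\<in>S. norm x \<le> r" using compact_imp_bounded[OF assms] bounded_iff by blast
  show ?thesis using r by (intro exI[of _ "max r 0"]) auto
qed

theorem mainTheorem9:
  fixes m1 m2 T :: real and Vs :: "(real \<times> real \<times> real \<times> real) set"
  assumes "m1 > 0" and "m2 > 0" and "T > 0" and "compact Vs"
    and "\<exists>A B Cs. compact A \<and> A \<subseteq> {0<..<1} \<and> compact B \<and> compact Cs \<and> Cs \<subseteq> {0<..}
           \<and> (\<forall>(X, W, s1, s2) \<in> Vs. X \<in> A \<and> W \<in> B \<and> s1 \<in> Cs \<and> s2 \<in> Cs)"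
  shows "\<exists>eps1 > 0. \<exists>C > 0. \<forall>eps \<in> {0<..eps1}. \<forall>s0 hb.
     0 \<le> px1 s0 \<and> px1 s0 \<le> pX s0 \<and> pX s0 \<le> px2 s0 \<and> px2 s0 \<le> 1
     \<longrightarrow> hslow eps s0 \<in> Vs
     \<longrightarrow> phi1 s0 \<in> \<int>
     \<longrightarrow> hb 0 = hslow eps s0
     \<longrightarrow> (\<forall>\<tau> \<ge> 0. (hb has_vector_derivative Hbar m1 m2 (hb \<tau>)) (at \<tau> within {0..}))
     \<longrightarrow> return_set eps m1 m2 s0 \<noteq> {}
     \<longrightarrow> Inf (return_set eps m1 m2 s0) \<le> T_min T (exit_set eps m1 m2 Vs s0 hb) / eps
     \<longrightarrow> (\<forall>t \<in> {0 .. Inf (return_set eps m1 m2 s0)}.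
            zdist (zfree (zcoord eps s0) t) (zcoord eps (emotion eps m1 m2 s0 t)) \<le> C * eps)"
proof -
  obtain A B Cs where ABC: "compact A" "A \<subseteq> {0<..<1}" "compact B" "compact Cs" "Cs \<subseteq> {0<..}"
    "\<forall>(X, W, s1, s2) \<in> Vs. X \<in> A \<and> W \<in> B \<and> s1 \<in> Cs \<and> s2 \<in> Cs" using assms(5) by blast
  obtain a b where ab: "0 < a" "a \<le> b" "b < 1" "A \<subseteq> {a..b}"
    using compact_interval_bounds[OF ABC(1,2)] by auto
  obtain c D where cD: "0 < c" "c \<le> D" "Cs \<subseteq> {c..D}" using compact_pos_bounds[OF ABC(4,5)] by auto
  obtain Bm where Bm: "0 \<le> Bm" "\<forall>w\<in>B. \<bar>w\<bar> \<le> Bm" using compact_abs_bound[OF ABC(3)] by auto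
  define Emax where "Emax = Bm\<^sup>2 + (m1 + m2) * D\<^sup>2"
  define Wm where "Wm = 1 + Emax"
  define vm where "vm = 1 + Emax / m1 + Emax / m2"
  define Tm where "Tm = 3 / c"
  define rho where "rho = (1 - b) / 2"
  define R where "R = vm + Wm"
  define dl where "dl = rho / R"
  define mu where "mu = min (a / 2) rho"
  define LF where "LF = (m1 / (a / 2) + m2 / rho) * vm * R"
  define CW where "CW = LF * Tm + 2 * (m1 + m2) * vm"
  define C1 where "C1 = 2 * m1 * vm + 2 * Wm"
  define C2 where "C2 = (2 * CW * Wm + 2 * m1 * C1 * vm) / (m2 * c)"
  define Xe where "Xe = Wm * Tm"
  define Cp where "Cp = (C1 + C2) / (2 * mu) + vm * Xe / (2 * mu\<^sup>2) + Wm / (2 * mu)"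
  define Cf where "Cf = Xe + CW + (C1 + C2) + Cp * Tm"
  have Emax_nn: "Emax \<ge> 0" unfolding Emax_def using assms(1,2) by simp
  have Wm_pos: "Wm \<ge> 1" unfolding Wm_def using Emax_nn by simp
  have vm_pos: "vm \<ge> 1" unfolding vm_def using Emax_nn assms(1,2) by simp
  have Tm_pos: "Tm > 0" unfolding Tm_def using cD by simp
  have rho_pos: "rho > 0" unfolding rho_def using ab by simp
  have R_pos: "R > 0" unfolding R_def using Wm_pos vm_pos by simp
  have mu_pos: "mu > 0" unfolding mu_def using ab rho_pos by simp
  have LF_nn: "LF \<ge> 0" unfolding LF_def using assms(1,2) ab rho_pos vm_pos R_pos by simp
  have CW_pos: "CW > 0" unfolding CW_def using LF_nn Tm_pos assms(1,2) vm_pos by (simp add: add_nonneg_pos)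
  have C1_pos: "C1 > 0" unfolding C1_def using assms(1) vm_pos Wm_pos by (simp add: add_nonneg_pos)
  have C2_pos: "C2 > 0" unfolding C2_def using CW_pos C1_pos Wm_pos vm_pos assms(1,2) cD(1)
    by (simp add: add_pos_nonneg)
  have Xe_pos: "Xe > 0" unfolding Xe_def using Wm_pos Tm_pos by simp
  have Cp_nn: "Cp \<ge> 0" unfolding Cp_def using C1_pos C2_pos mu_pos vm_pos Wm_pos Xe_pos by simp
  have "Cp * Tm \<ge> 0" using Cp_nn Tm_pos by simp
  then have Cf_pos: "Cf > 0" unfolding Cf_def using Xe_pos CW_pos C1_pos C2_pos by linarith
  define eps1 where "eps1 = Min {1, mu / (Wm * Tm), c / (16 * Wm), c / (2 * C1), c / (2 * C2), 1 / (2 * m2)}"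
  have eps1_le: "eps1 \<le> 1" "eps1 \<le> mu / (Wm * Tm)" "eps1 \<le> c / (16 * Wm)" "eps1 \<le> c / (2 * C1)"
    "eps1 \<le> c / (2 * C2)" "eps1 \<le> 1 / (2 * m2)" unfolding eps1_def by simp_all
  have eps1_pos: "eps1 > 0" unfolding eps1_def
    using mu_pos Wm_pos Tm_pos cD(1) C1_pos C2_pos assms(2) by simp
  have Cfp: "Cf + 1 > 0" using Cf_pos by simp
  show ?thesis
  proof (rule exI[of _ eps1], rule conjI[OF eps1_pos], rule exI[of _ "Cf + 1"], rule conjI[OF Cfp],
      intro ballI allI impI)
    fix eps s0 hb t
    assume eps: "eps \<in> {0<..eps1}"
      and o: "0 \<le> px1 s0 \<and> px1 s0 \<le> pX s0 \<and> pX s0 \<le> px2 s0 \<and> px2 s0 \<le> 1"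
      and hs: "hslow eps s0 \<in> Vs" and pz: "phi1 s0 \<in> \<int>"
      and "hb 0 = hslow eps s0"
      and "\<forall>\<tau> \<ge> 0. (hb has_vector_derivative Hbar m1 m2 (hb \<tau>)) (at \<tau> within {0..})"
      and "return_set eps m1 m2 s0 \<noteq> {}"
      and "Inf (return_set eps m1 m2 s0) \<le> T_min T (exit_set eps m1 m2 Vs s0 hb) / eps"
      and t: "t \<in> {0 .. Inf (return_set eps m1 m2 s0)}"
    have e0: "0 < eps" "eps \<le> eps1" using eps by auto
    have hs': "pX s0 \<in> A" "pV s0 / eps \<in> B" "\<bar>pv1 s0\<bar> \<in> Cs" "\<bar>pv2 s0\<bar> \<in> Cs"
      using ABC(6) hs unfolding hslow_def by auto
    have ord: "ordp s0" using o unfolding ordp_def by simp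
    have X0: "a \<le> pX s0" "pX s0 \<le> b" using hs'(1) ab(4) by auto
    have x10: "px1 s0 = 0" using phi1_int_x1[OF ord _ pz] X0 ab by simp
    have sm1: "eps * Wm * Tm \<le> mu"
    proof -
      have "eps * (Wm * Tm) \<le> mu / (Wm * Tm) * (Wm * Tm)"
        using e0 eps1_le(2) Wm_pos Tm_pos by (intro mult_right_mono) auto
      then show ?thesis using Wm_pos Tm_pos by (simp add: mult.assoc)
    qed
    have sm2: "eps * Wm \<le> c / 16"
    proof -
      have "eps * Wm \<le> c / (16 * Wm) * Wm" using e0 eps1_le(3) Wm_pos by (intro mult_right_mono) auto
      then show ?thesis using Wm_pos by simp
    qed
    have sm3: "eps * C1 \<le> c / 2"
    proof -
      have "eps * C1 \<le> c / (2 * C1) * C1" using e0 eps1_le(4) C1_pos by (intro mult_right_mono) auto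
      then show ?thesis using C1_pos by simp
    qed
    have sm4: "eps * C2 \<le> c / 2"
    proof -
      have "eps * C2 \<le> c / (2 * C2) * C2" using e0 eps1_le(5) C2_pos by (intro mult_right_mono) auto
      then show ?thesis using C2_pos by simp
    qed
    have sm5: "eps\<^sup>2 * m2 \<le> 1 / 2"
    proof -
      have e1: "eps \<le> 1" using e0 eps1_le(1) by simp
      have "eps\<^sup>2 \<le> eps" using e0 e1 by (simp add: power2_eq_square mult_le_cancel_right1)
      then have "eps\<^sup>2 * m2 \<le> eps * m2" using assms(2) by (intro mult_right_mono) auto
      also have "\<dots> \<le> 1 / (2 * m2) * m2" using e0 eps1_le(6) assms(2) by (intro mult_right_mono) auto
      finally show ?thesis using assms(2) by simp
    qed
    interpret tr: traj m1 m2 eps a b c D Bm s0 Emax Wm vm Tm rho R dl mu LF CW C1 C2 Xe Cp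
    proof
      show "m1 > 0" "m2 > 0" by (rule assms(1), rule assms(2))
      show "eps > 0" using e0 by simp
      show "eps \<le> 1" using e0 eps1_le(1) by simp
      show "0 < a" "a \<le> b" "b < 1" using ab by auto
      show "0 < c" "c \<le> D" "0 \<le> Bm" using cD Bm by auto
      show "ordp s0" by (rule ord)
      show "px1 s0 = 0" by (rule x10)
      show "a \<le> pX s0" "pX s0 \<le> b" using X0 by auto
      show "\<bar>pV s0 / eps\<bar> \<le> Bm" using Bm(2) hs'(2) by blast
      show "c \<le> \<bar>pv1 s0\<bar>" "\<bar>pv1 s0\<bar> \<le> D" using hs'(3) cD(3) by auto
      show "c \<le> \<bar>pv2 s0\<bar>" "\<bar>pv2 s0\<bar> \<le> D" using hs'(4) cD(3) by auto
    qed (fact Emax_def Wm_def vm_def Tm_def rho_def R_def dl_def mu_def LF_def CW_def C1_def C2_def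
        Xe_def Cp_def sm1 sm2 sm3 sm4 sm5)+
    have z: "zdist (zfree (zcoord eps s0) t) (zcoord eps (emotion eps m1 m2 s0 t)) \<le> tr.Cf * eps"
      using tr.final t by blast
    have eq: "tr.Cf = Cf" unfolding tr.Cf_def Cf_def ..
    have le: "Cf * eps \<le> (Cf + 1) * eps" using e0 by simp
    from order.trans[OF z[unfolded eq] le] show "zdist (zfree (zcoord eps s0) t) (zcoord eps (emotion eps m1 m2 s0 t)) \<le> (Cf + 1) * eps" .
  qed
qed


end
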